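(* The center of $\mathcal W_\xi$ is generated by $z^{\pm1}$, $x^{\pm N}$ and $y^{\pm N}$, and $\phi$ maps the center of $\mathcal U_\xi$ into the center of $\mathcal W_\xi$. Explicitly, \[ \phi(K^N)=x^N,\qquad \phi(E^N)=y^N(x^N-z^N),\qquad \phi(F^N)=y^{-N}(1-z^{-N}x^{-N}). \]
   Context: $N\ge2$ is an integer and $\xi=e^{\pi i/N}$. $\mathcal U_\xi$ is the $\mathbb C$-algebra generated by $K^{\pm1},E,F$ with $KE=\xi^2EK$, $KF=\xi^{-2}FK$, $[E,F]=(\xi-\xi^{-1})(K-K^{-1})$. $\mathcal W_\xi$ is the $\mathbb C$-algebra generated by invertible $x,y$ and a central invertible $z$ with $xy=\xi^2yx$. $\phi:\mathcal U_\xi\to\mathcal W_\xi$ is the algebra homomorphism with $\phi(K)=x$, $\phi(E)=\xi y(z-x)$, $\phi(F)=y^{-1}(1-z^{-1}x^{-1})$. *)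

theory Defs
  imports Complex_Main
begin

text \<open>An element of the free associative C-algebra on generators of type 'g is a
finitely supported function from words (lists of generators) to C.  An algebra given
by generators and relations is represented as the free algebra modulo the two-sided
ideal generated by the relations; equalities in the quotient are expressed as
"difference lies in the ideal".\<close>

type_synonym 'g fa = "'g list \<Rightarrow> complex"

definition fa :: "'g fa \<Rightarrow> bool" where
  "fa p \<longleftrightarrow> finite {w. p w \<noteq> 0}"

definition fa_zero :: "'g fa" where "fa_zero = (\<lambda>w. 0)"
definition fa_one :: "'g fa" where "fa_one = (\<lambda>w. if w = [] then 1 else 0)"
definition fa_gen :: "'g \<Rightarrow> 'g fa" where "fa_gen g = (\<lambda>w. if w = [g] then 1 else 0)"
definition fa_add :: "'g fa \<Rightarrow> 'g fa \<Rightarrow> 'g fa" where "fa_add p q = (\<lambda>w. p w + q w)"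
definition fa_sub :: "'g fa \<Rightarrow> 'g fa \<Rightarrow> 'g fa" where "fa_sub p q = (\<lambda>w. p w - q w)"
definition fa_smult :: "complex \<Rightarrow> 'g fa \<Rightarrow> 'g fa" where "fa_smult c p = (\<lambda>w. c * p w)"
definition fa_mult :: "'g fa \<Rightarrow> 'g fa \<Rightarrow> 'g fa" where
  "fa_mult p q = (\<lambda>w. \<Sum>(u, v) \<in> {(u, v). u @ v = w}. p u * q v)"

primrec fa_pow :: "'g fa \<Rightarrow> nat \<Rightarrow> 'g fa" where
  "fa_pow p 0 = fa_one"
| "fa_pow p (Suc n) = fa_mult p (fa_pow p n)"

inductive_set fa_ideal :: "'g fa set \<Rightarrow> 'g fa set" for R where
  gen: "r \<in> R \<Longrightarrow> r \<in> fa_ideal R"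
| zero: "fa_zero \<in> fa_ideal R"
| add: "a \<in> fa_ideal R \<Longrightarrow> b \<in> fa_ideal R \<Longrightarrow> fa_add a b \<in> fa_ideal R"
| mult: "a \<in> fa_ideal R \<Longrightarrow> fa u \<Longrightarrow> fa v \<Longrightarrow> fa_mult (fa_mult u a) v \<in> fa_ideal R"

inductive_set fa_subalg :: "'g fa set \<Rightarrow> 'g fa set" for S where
  one: "fa_one \<in> fa_subalg S"
| gen: "s \<in> S \<Longrightarrow> s \<in> fa_subalg S"
| add: "a \<in> fa_subalg S \<Longrightarrow> b \<in> fa_subalg S \<Longrightarrow> fa_add a b \<in> fa_subalg S"
| smult: "a \<in> fa_subalg S \<Longrightarrow> fa_smult c a \<in> fa_subalg S"
| mult: "a \<in> fa_subalg S \<Longrightarrow> b \<in> fa_subalg S \<Longrightarrow> fa_mult a b \<in> fa_subalg S"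

primrec word_eval :: "('g \<Rightarrow> 'h fa) \<Rightarrow> 'g list \<Rightarrow> 'h fa" where
  "word_eval f [] = fa_one"
| "word_eval f (g # w) = fa_mult (f g) (word_eval f w)"

definition fa_hom :: "('g \<Rightarrow> 'h fa) \<Rightarrow> 'g fa \<Rightarrow> 'h fa" where
  "fa_hom f p = (\<lambda>v. \<Sum>w \<in> {w. p w \<noteq> 0}. p w * word_eval f w v)"

definition quot_central :: "'g fa set \<Rightarrow> 'g fa \<Rightarrow> bool" where
  "quot_central I u \<longleftrightarrow> fa u \<and> (\<forall>v. fa v \<longrightarrow> fa_sub (fa_mult u v) (fa_mult v u) \<in> I)"

definition xi :: "nat \<Rightarrow> complex" where "xi N = exp (pi * \<i> / of_nat N)"

datatype ugen = UK | UKi | UE | UF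
datatype wgen = WX | WXi | WY | WYi | WZ | WZi

definition U_rels :: "nat \<Rightarrow> ugen fa set" where
  "U_rels N = (let q = xi N; K = fa_gen UK; Ki = fa_gen UKi; E = fa_gen UE; F = fa_gen UF in
     { fa_sub (fa_mult K Ki) fa_one, fa_sub (fa_mult Ki K) fa_one,
       fa_sub (fa_mult K E) (fa_smult (q^2) (fa_mult E K)),
       fa_sub (fa_mult K F) (fa_smult (inverse (q^2)) (fa_mult F K)),
       fa_sub (fa_sub (fa_mult E F) (fa_mult F E)) (fa_smult (q - inverse q) (fa_sub K Ki)) })"

definition U_ideal :: "nat \<Rightarrow> ugen fa set" where "U_ideal N = fa_ideal (U_rels N)"

definition W_rels :: "nat \<Rightarrow> wgen fa set" where
  "W_rels N = (let q = xi N; x = fa_gen WX; xi' = fa_gen WXi; y = fa_gen WY; yi = fa_gen WYi;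
                   z = fa_gen WZ; zi = fa_gen WZi in
     { fa_sub (fa_mult x xi') fa_one, fa_sub (fa_mult xi' x) fa_one,
       fa_sub (fa_mult y yi) fa_one, fa_sub (fa_mult yi y) fa_one,
       fa_sub (fa_mult z zi) fa_one, fa_sub (fa_mult zi z) fa_one,
       fa_sub (fa_mult x y) (fa_smult (q^2) (fa_mult y x)) }
     \<union> { fa_sub (fa_mult z g) (fa_mult g z) | g. g \<in> {x, xi', y, yi} })"

definition W_ideal :: "nat \<Rightarrow> wgen fa set" where "W_ideal N = fa_ideal (W_rels N)"

definition phi_gen :: "nat \<Rightarrow> ugen \<Rightarrow> wgen fa" where
  "phi_gen N g = (case g of
      UK \<Rightarrow> fa_gen WX
    | UKi \<Rightarrow> fa_gen WXi
    | UE \<Rightarrow> fa_smult (xi N) (fa_mult (fa_gen WY) (fa_sub (fa_gen WZ) (fa_gen WX)))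
    | UF \<Rightarrow> fa_mult (fa_gen WYi) (fa_sub fa_one (fa_mult (fa_gen WZi) (fa_gen WXi))))"

definition phi :: "nat \<Rightarrow> ugen fa \<Rightarrow> wgen fa" where "phi N = fa_hom (phi_gen N)"

end

theory Submission
  imports Defs "HOL-Computational_Algebra.Polynomial" "HOL-Library.Real_Mod"
begin

section \<open>Basic algebra of fa\<close>

lemma finite_D2: "finite {(u,v). u @ v = (w::'a list)}"
proof -
  have "{(u,v). u @ v = w} = (\<lambda>i. (take i w, drop i w)) ` {..length w}"
    apply (auto simp: append_eq_conv_conj image_iff)
    subgoal for a
      apply (rule bexI[where x="length a"])
       apply simp
      by (drule arg_cong[where f=length]) auto
    done
  then show ?thesis by simp
qed


lemma fa_mult_assoc: "fa_mult (fa_mult p q) r = fa_mult p (fa_mult q r)"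
proof (rule ext)
  fix w :: "'a list"
  let ?D = "\<lambda>w::'a list. {(u,v). u @ v = w}"
  have "fa_mult (fa_mult p q) r w =
     (\<Sum>x\<in>?D w. \<Sum>y\<in>?D (fst x). p (fst y) * q (snd y) * r (snd x))"
    unfolding fa_mult_def
    by (rule sum.cong) (auto simp: sum_distrib_right case_prod_beta)
  also have "\<dots> = (\<Sum>z\<in>Sigma (?D w) (\<lambda>x. ?D (fst x)).
                     p (fst (snd z)) * q (snd (snd z)) * r (snd (fst z)))"
    by (subst sum.Sigma) (auto simp: finite_D2 case_prod_beta)
  also have "\<dots> = (\<Sum>z\<in>Sigma (?D w) (\<lambda>x. ?D (snd x)).
                     p (fst (fst z)) * q (fst (snd z)) * r (snd (snd z)))"
    by (rule sum.reindex_bij_witness[where i="\<lambda>((a,t),(b,c)). ((a@b,c),(a,b))"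
                                       and j="\<lambda>((s,c),(a,b)). ((a,b@c),(b,c))"]) auto
  also have "\<dots> = (\<Sum>x\<in>?D w. \<Sum>y\<in>?D (snd x). p (fst x) * q (fst y) * r (snd y))"
    by (subst sum.Sigma) (auto simp: finite_D2 case_prod_beta)
  also have "\<dots> = fa_mult p (fa_mult q r) w"
    unfolding fa_mult_def
    by (rule sum.cong) (auto simp: sum_distrib_left case_prod_beta mult.assoc)
  finally show "fa_mult (fa_mult p q) r w = fa_mult p (fa_mult q r) w" .
qed

lemma fa_mult_one_left[simp]: "fa_mult fa_one p = p"
proof (rule ext)
  fix w
  have "fa_mult fa_one p w = (\<Sum>x\<in>{(u,v). u @ v = w}. if x = ([], w) then p w else 0)"
    unfolding fa_mult_def fa_one_def by (rule sum.cong) (auto split: if_splits)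
  also have "\<dots> = p w" by (subst sum.delta) (auto simp: finite_D2)
  finally show "fa_mult fa_one p w = p w" .
qed

lemma fa_mult_one_right[simp]: "fa_mult p fa_one = p"
proof (rule ext)
  fix w
  have "fa_mult p fa_one w = (\<Sum>x\<in>{(u,v). u @ v = w}. if x = (w, []) then p w else 0)"
    unfolding fa_mult_def fa_one_def by (rule sum.cong) (auto split: if_splits)
  also have "\<dots> = p w" by (subst sum.delta) (auto simp: finite_D2)
  finally show "fa_mult p fa_one w = p w" .
qed

lemma fa_mult_add_left: "fa_mult (fa_add p q) r = fa_add (fa_mult p r) (fa_mult q r)"
  unfolding fa_mult_def fa_add_def by (simp add: sum.distrib case_prod_beta distrib_right)
lemma fa_mult_add_right: "fa_mult r (fa_add p q) = fa_add (fa_mult r p) (fa_mult r q)"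
  unfolding fa_mult_def fa_add_def by (simp add: sum.distrib case_prod_beta distrib_left)
lemma fa_mult_sub_left: "fa_mult (fa_sub p q) r = fa_sub (fa_mult p r) (fa_mult q r)"
  unfolding fa_mult_def fa_sub_def by (simp add: sum_subtractf case_prod_beta left_diff_distrib)
lemma fa_mult_sub_right: "fa_mult r (fa_sub p q) = fa_sub (fa_mult r p) (fa_mult r q)"
  unfolding fa_mult_def fa_sub_def by (simp add: sum_subtractf case_prod_beta right_diff_distrib)
lemma fa_mult_smult_left: "fa_mult (fa_smult c p) r = fa_smult c (fa_mult p r)"
  unfolding fa_mult_def fa_smult_def by (simp add: sum_distrib_left case_prod_beta mult.assoc)
lemma fa_mult_smult_right: "fa_mult r (fa_smult c p) = fa_smult c (fa_mult r p)"
  unfolding fa_mult_def fa_smult_def by (simp add: sum_distrib_left case_prod_beta mult.left_commute)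
lemma fa_mult_zero_left[simp]: "fa_mult fa_zero r = fa_zero"
  unfolding fa_mult_def fa_zero_def by simp
lemma fa_mult_zero_right[simp]: "fa_mult r fa_zero = fa_zero"
  unfolding fa_mult_def fa_zero_def by simp

lemmas fa_ring_simps = fa_mult_assoc fa_mult_add_left fa_mult_add_right fa_mult_sub_left
  fa_mult_sub_right fa_mult_smult_left fa_mult_smult_right

lemma fa_mult_nz: "fa_mult p q w \<noteq> 0 \<Longrightarrow> \<exists>u v. w = u @ v \<and> p u \<noteq> 0 \<and> q v \<noteq> 0"
proof -
  assume "fa_mult p q w \<noteq> 0"
  then obtain x where "x \<in> {(u,v). u @ v = w}" "p (fst x) * q (snd x) \<noteq> 0"
    unfolding fa_mult_def case_prod_beta by (meson sum.not_neutral_contains_not_neutral)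
  then show ?thesis by (intro exI[of _ "fst x"] exI[of _ "snd x"]) auto
qed

lemma fa_multI[simp]: "fa p \<Longrightarrow> fa q \<Longrightarrow> fa (fa_mult p q)"
proof -
  assume "fa p" "fa q"
  have "{w. fa_mult p q w \<noteq> 0} \<subseteq> (\<lambda>(u,v). u @ v) ` ({u. p u \<noteq> 0} \<times> {v. q v \<noteq> 0})"
    using fa_mult_nz by fastforce
  then show ?thesis using \<open>fa p\<close> \<open>fa q\<close> unfolding fa_def
    by (meson finite_SigmaI finite_imageI finite_subset)
qed

lemma fa_addI[simp]: "fa p \<Longrightarrow> fa q \<Longrightarrow> fa (fa_add p q)"
  unfolding fa_def fa_add_def
  by (rule finite_subset[where B="{w. p w \<noteq> 0} \<union> {w. q w \<noteq> 0}"]) auto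
lemma fa_subI[simp]: "fa p \<Longrightarrow> fa q \<Longrightarrow> fa (fa_sub p q)"
  unfolding fa_def fa_sub_def
  by (rule finite_subset[where B="{w. p w \<noteq> 0} \<union> {w. q w \<noteq> 0}"]) auto
lemma fa_smultI[simp]: "fa p \<Longrightarrow> fa (fa_smult c p)"
  unfolding fa_def fa_smult_def
  by (rule finite_subset[where B="{w. p w \<noteq> 0}"]) auto
lemma fa_oneI[simp]: "fa fa_one" unfolding fa_def fa_one_def
  by (rule finite_subset[where B="{[]}"]) auto
lemma fa_zeroI[simp]: "fa fa_zero" unfolding fa_def fa_zero_def by auto
lemma fa_genI[simp]: "fa (fa_gen g)" unfolding fa_def fa_gen_def
  by (rule finite_subset[where B="{[g]}"]) auto
lemma fa_powI[simp]: "fa p \<Longrightarrow> fa (fa_pow p n)" by (induction n) auto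

lemma fa_pow_add: "fa_pow p (m + n) = fa_mult (fa_pow p m) (fa_pow p n)"
  by (induction m) (auto simp: fa_mult_assoc)
lemma fa_pow_mult: "fa_pow p (m * n) = fa_pow (fa_pow p m) n"
  by (induction n) (simp_all add: fa_pow_add)
lemma fa_pow_Suc2: "fa_pow p (Suc n) = fa_mult (fa_pow p n) p"
  using fa_pow_add[of p n 1] by simp

definition fa_sum :: "('i \<Rightarrow> 'g fa) \<Rightarrow> 'i set \<Rightarrow> 'g fa" where
  "fa_sum F S = (\<lambda>w. \<Sum>i\<in>S. F i w)"

lemma fa_sum_empty[simp]: "fa_sum F {} = fa_zero"
  unfolding fa_sum_def fa_zero_def by simp
lemma fa_sum_insert: "finite S \<Longrightarrow> i \<notin> S \<Longrightarrow> fa_sum F (insert i S) = fa_add (F i) (fa_sum F S)"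
  unfolding fa_sum_def fa_add_def by simp
lemma fa_sumI[simp]: "finite S \<Longrightarrow> (\<And>i. i \<in> S \<Longrightarrow> fa (F i)) \<Longrightarrow> fa (fa_sum F S)"
  by (induction S rule: finite_induct) (auto simp: fa_sum_insert)


section \<open>Ideals\<close>

lemma ideal_fa: "a \<in> fa_ideal R \<Longrightarrow> (\<And>r. r \<in> R \<Longrightarrow> fa r) \<Longrightarrow> fa a"
  by (induction rule: fa_ideal.induct) auto

lemma I_left: "a \<in> fa_ideal R \<Longrightarrow> fa u \<Longrightarrow> fa_mult u a \<in> fa_ideal R"
  using fa_ideal.mult[of a R u fa_one] by simp
lemma I_right: "a \<in> fa_ideal R \<Longrightarrow> fa v \<Longrightarrow> fa_mult a v \<in> fa_ideal R"
  using fa_ideal.mult[of a R fa_one v] by simp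
lemma I_smult: "a \<in> fa_ideal R \<Longrightarrow> fa_smult c a \<in> fa_ideal R"
  using I_left[of a R "fa_smult c fa_one"] by (simp add: fa_mult_smult_left)
lemma fa_sub_as_add: "fa_sub a b = fa_add a (fa_smult (-1) b)"
  unfolding fa_sub_def fa_add_def fa_smult_def by simp
lemma I_sub: "a \<in> fa_ideal R \<Longrightarrow> b \<in> fa_ideal R \<Longrightarrow> fa_sub a b \<in> fa_ideal R"
  by (simp add: fa_sub_as_add fa_ideal.add I_smult)
lemma I_sum: "finite S \<Longrightarrow> (\<And>i. i \<in> S \<Longrightarrow> F i \<in> fa_ideal R) \<Longrightarrow> fa_sum F S \<in> fa_ideal R"
  by (induction S rule: finite_induct) (auto simp: fa_sum_insert fa_ideal.zero fa_ideal.add)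

definition fcong :: "'g fa set \<Rightarrow> 'g fa \<Rightarrow> 'g fa \<Rightarrow> bool" where
  "fcong R a b \<longleftrightarrow> fa_sub a b \<in> fa_ideal R"

lemma fcong_refl[simp]: "fcong R a a"
proof -
  have "fa_sub a a = fa_zero" unfolding fa_sub_def fa_zero_def by simp
  then show ?thesis unfolding fcong_def by (simp add: fa_ideal.zero)
qed
lemma fcong_eq: "a = b \<Longrightarrow> fcong R a b" by simp
lemma fcong_sym: "fcong R a b \<Longrightarrow> fcong R b a"
proof -
  assume "fcong R a b"
  then have "fa_smult (-1) (fa_sub a b) \<in> fa_ideal R" unfolding fcong_def by (rule I_smult)
  moreover have "fa_smult (-1) (fa_sub a b) = fa_sub b a"
    unfolding fa_smult_def fa_sub_def by auto
  ultimately show ?thesis unfolding fcong_def by simp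
qed
lemma fcong_trans: "fcong R a b \<Longrightarrow> fcong R b c \<Longrightarrow> fcong R a c"
proof -
  assume "fcong R a b" "fcong R b c"
  then have "fa_add (fa_sub a b) (fa_sub b c) \<in> fa_ideal R" unfolding fcong_def by (rule fa_ideal.add)
  moreover have "fa_add (fa_sub a b) (fa_sub b c) = fa_sub a c"
    unfolding fa_add_def fa_sub_def by auto
  ultimately show ?thesis unfolding fcong_def by simp
qed
lemma fcong_trans_eq1[trans]: "a = b \<Longrightarrow> fcong R b c \<Longrightarrow> fcong R a c" by simp
lemma fcong_trans_eq2[trans]: "fcong R a b \<Longrightarrow> b = c \<Longrightarrow> fcong R a c" by simp
declare fcong_trans[trans]

lemma fcong_add: "fcong R a b \<Longrightarrow> fcong R c d \<Longrightarrow> fcong R (fa_add a c) (fa_add b d)"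
proof -
  assume "fcong R a b" "fcong R c d"
  then have "fa_add (fa_sub a b) (fa_sub c d) \<in> fa_ideal R" unfolding fcong_def by (rule fa_ideal.add)
  moreover have "fa_add (fa_sub a b) (fa_sub c d) = fa_sub (fa_add a c) (fa_add b d)"
    unfolding fa_add_def fa_sub_def by auto
  ultimately show ?thesis unfolding fcong_def by simp
qed
lemma fcong_sub: "fcong R a b \<Longrightarrow> fcong R c d \<Longrightarrow> fcong R (fa_sub a c) (fa_sub b d)"
proof -
  assume "fcong R a b" "fcong R c d"
  then have "fa_sub (fa_sub a b) (fa_sub c d) \<in> fa_ideal R" unfolding fcong_def by (rule I_sub)
  moreover have "fa_sub (fa_sub a b) (fa_sub c d) = fa_sub (fa_sub a c) (fa_sub b d)"
    unfolding fa_sub_def by auto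
  ultimately show ?thesis unfolding fcong_def by simp
qed
lemma fcong_smult: "fcong R a b \<Longrightarrow> fcong R (fa_smult c a) (fa_smult c b)"
proof -
  assume "fcong R a b"
  then have "fa_smult c (fa_sub a b) \<in> fa_ideal R" unfolding fcong_def by (rule I_smult)
  moreover have "fa_smult c (fa_sub a b) = fa_sub (fa_smult c a) (fa_smult c b)"
    unfolding fa_smult_def fa_sub_def by (auto simp: algebra_simps)
  ultimately show ?thesis unfolding fcong_def by simp
qed
lemma fcong_mult_left: "fa u \<Longrightarrow> fcong R a b \<Longrightarrow> fcong R (fa_mult u a) (fa_mult u b)"
  unfolding fcong_def by (metis I_left fa_mult_sub_right)
lemma fcong_mult_right: "fa v \<Longrightarrow> fcong R a b \<Longrightarrow> fcong R (fa_mult a v) (fa_mult b v)"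
  unfolding fcong_def by (metis I_right fa_mult_sub_left)
lemma fcong_mult: "fa a' \<Longrightarrow> fa b \<Longrightarrow> fcong R a a' \<Longrightarrow> fcong R b b' \<Longrightarrow>
    fcong R (fa_mult a b) (fa_mult a' b')"
  by (meson fcong_mult_left fcong_mult_right fcong_trans)
lemma fcong_sum: "finite S \<Longrightarrow> (\<And>i. i \<in> S \<Longrightarrow> fcong R (F i) (G i)) \<Longrightarrow>
    fcong R (fa_sum F S) (fa_sum G S)"
  by (induction S rule: finite_induct) (auto simp: fa_sum_insert fcong_add)
lemma fcong_zero_iff: "fcong R a fa_zero \<longleftrightarrow> a \<in> fa_ideal R"
proof -
  have "fa_sub a fa_zero = a" unfolding fa_sub_def fa_zero_def by simp
  then show ?thesis unfolding fcong_def by simp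
qed
lemma fa_smult_smult[simp]: "fa_smult c (fa_smult d a) = fa_smult (c * d) a"
  unfolding fa_smult_def by (simp add: mult.assoc)
lemma fa_smult_one[simp]: "fa_smult 1 a = a"
  unfolding fa_smult_def by simp

lemma fcong_comm_pow:
  assumes "fa a" "fa b" "fcong R (fa_mult a b) (fa_smult k (fa_mult b a))"
  shows "fcong R (fa_mult a (fa_pow b n)) (fa_smult (k ^ n) (fa_mult (fa_pow b n) a))"
proof (induction n)
  case 0 then show ?case by simp
next
  case (Suc n)
  have "fa_mult a (fa_pow b (Suc n)) = fa_mult (fa_mult a b) (fa_pow b n)"
    by (simp add: fa_mult_assoc)
  also have "fcong R \<dots> (fa_mult (fa_smult k (fa_mult b a)) (fa_pow b n))"
    using assms by (intro fcong_mult_right) auto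
  also have "\<dots> = fa_smult k (fa_mult b (fa_mult a (fa_pow b n)))"
    by (simp add: fa_mult_assoc fa_mult_smult_left)
  finally have 1: "fcong R (fa_mult a (fa_pow b (Suc n))) (fa_smult k (fa_mult b (fa_mult a (fa_pow b n))))" .
  have "fcong R (fa_smult k (fa_mult b (fa_mult a (fa_pow b n))))
      (fa_smult k (fa_mult b (fa_smult (k ^ n) (fa_mult (fa_pow b n) a))))"
    using Suc assms by (intro fcong_smult fcong_mult_left) auto
  also have "fa_smult k (fa_mult b (fa_smult (k ^ n) (fa_mult (fa_pow b n) a))) =
     fa_smult (k ^ Suc n) (fa_mult (fa_pow b (Suc n)) a)"
    by (simp add: fa_mult_assoc fa_mult_smult_right)
  finally show ?case using 1 fcong_trans by blast
qed

section \<open>Linear operators on function spaces and actions of fa\<close>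

type_synonym 'm vec = "'m \<Rightarrow> complex"

definition lin :: "('m vec \<Rightarrow> 'm vec) \<Rightarrow> bool" where
  "lin T \<longleftrightarrow> (\<forall>f g. T (\<lambda>m. f m + g m) = (\<lambda>m. T f m + T g m)) \<and>
             (\<forall>c f. T (\<lambda>m. c * f m) = (\<lambda>m. c * T f m))"

lemma lin_add: "lin T \<Longrightarrow> T (\<lambda>m. f m + g m) = (\<lambda>m. T f m + T g m)"
  unfolding lin_def by blast
lemma lin_scal: "lin T \<Longrightarrow> T (\<lambda>m. c * f m) = (\<lambda>m. c * T f m)"
  unfolding lin_def by blast
lemma lin_zero: "lin T \<Longrightarrow> T (\<lambda>m. 0) = (\<lambda>m. 0)"
  using lin_scal[of T 0 "\<lambda>m. 0"] by simp
lemma lin_diff: "lin T \<Longrightarrow> T (\<lambda>m. f m - g m) = (\<lambda>m. T f m - T g m)"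
proof -
  assume T: "lin T"
  have "T (\<lambda>m. f m - g m) = T (\<lambda>m. f m + (\<lambda>m. (-1) * g m) m)" by simp
  also have "\<dots> = (\<lambda>m. T f m + T (\<lambda>m. (-1) * g m) m)" by (rule lin_add[OF T])
  also have "\<dots> = (\<lambda>m. T f m - T g m)" using lin_scal[OF T, of "-1" g] by simp
  finally show ?thesis .
qed
lemma lin_sum0: "finite S \<Longrightarrow> lin T \<Longrightarrow> T (\<lambda>m. \<Sum>i\<in>S. F i m) = (\<lambda>m. \<Sum>i\<in>S. T (F i) m)"
proof (induction S rule: finite_induct)
  case empty then show ?case by (simp add: lin_zero)
next
  case (insert x S)
  have "T (\<lambda>m. \<Sum>i\<in>insert x S. F i m) = T (\<lambda>m. F x m + (\<lambda>m. \<Sum>i\<in>S. F i m) m)"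
    using insert by simp
  also have "\<dots> = (\<lambda>m. T (F x) m + T (\<lambda>m. \<Sum>i\<in>S. F i m) m)" by (rule lin_add[OF insert(4)])
  finally show ?case using insert by simp
qed
lemma lin_sum: "lin T \<Longrightarrow> finite S \<Longrightarrow> T (\<lambda>m. \<Sum>i\<in>S. F i m) = (\<lambda>m. \<Sum>i\<in>S. T (F i) m)"
  using lin_sum0 by blast
lemma lin_scal_sum: "lin T \<Longrightarrow> finite S \<Longrightarrow>
    T (\<lambda>m. \<Sum>i\<in>S. c i * F i m) = (\<lambda>m. \<Sum>i\<in>S. c i * T (F i) m)"
proof -
  assume T: "lin T" and S: "finite S"
  show ?thesis using lin_sum[OF T S, of "\<lambda>i m. c i * F i m"] by (simp add: lin_scal[OF T])
qed
lemma lin_id: "lin (\<lambda>f. f)" unfolding lin_def by simp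
lemma lin_comp: "lin S \<Longrightarrow> lin T \<Longrightarrow> lin (\<lambda>f. S (T f))"
  unfolding lin_def by simp

definition act :: "('g list \<Rightarrow> 'm vec \<Rightarrow> 'm vec) \<Rightarrow> 'g fa \<Rightarrow> 'm vec \<Rightarrow> 'm vec" where
  "act Lw p f = (\<lambda>m. \<Sum>u\<in>{u. p u \<noteq> 0}. p u * Lw u f m)"

definition fa_word :: "'g list \<Rightarrow> 'g fa" where "fa_word u = (\<lambda>w. if w = u then 1 else 0)"

lemma fa_wordI[simp]: "fa (fa_word u)"
  unfolding fa_def fa_word_def by (rule finite_subset[where B="{u}"]) auto
lemma fa_gen_word: "fa_gen g = fa_word [g]" unfolding fa_gen_def fa_word_def by simp
lemma fa_one_word: "fa_one = fa_word []" unfolding fa_one_def fa_word_def by simp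
lemma fa_word_mult: "fa_mult (fa_word u) (fa_word v) = fa_word (u @ v)"
proof (rule ext)
  fix w
  have "fa_mult (fa_word u) (fa_word v) w =
      (\<Sum>x\<in>{(u,v). u @ v = w}. if x = (u, v) then (if w = u @ v then 1 else 0) else 0)"
    unfolding fa_mult_def fa_word_def by (rule sum.cong) (auto split: if_splits)
  also have "\<dots> = fa_word (u @ v) w" by (subst sum.delta) (auto simp: finite_D2 fa_word_def)
  finally show "fa_mult (fa_word u) (fa_word v) w = fa_word (u @ v) w" .
qed

lemma act_supset:
  assumes "finite S" "{u. p u \<noteq> 0} \<subseteq> S"
  shows "act Lw p f = (\<lambda>m. \<Sum>u\<in>S. p u * Lw u f m)"
  unfolding act_def by (rule ext, rule sum.mono_neutral_left) (use assms in auto)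

lemma act_add: "fa p \<Longrightarrow> fa q \<Longrightarrow> act Lw (fa_add p q) f = (\<lambda>m. act Lw p f m + act Lw q f m)"
proof -
  assume "fa p" "fa q"
  let ?S = "{u. p u \<noteq> 0} \<union> {u. q u \<noteq> 0}"
  have fin: "finite ?S" using \<open>fa p\<close> \<open>fa q\<close> unfolding fa_def by simp
  show ?thesis
    apply (subst act_supset[OF fin], force simp: fa_add_def)
    apply (subst act_supset[OF fin, of p], force)
    apply (subst act_supset[OF fin, of q], force)
    by (simp add: fa_add_def sum.distrib distrib_right)
qed

lemma act_sub: "fa p \<Longrightarrow> fa q \<Longrightarrow> act Lw (fa_sub p q) f = (\<lambda>m. act Lw p f m - act Lw q f m)"
proof -
  assume "fa p" "fa q"
  let ?S = "{u. p u \<noteq> 0} \<union> {u. q u \<noteq> 0}"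
  have fin: "finite ?S" using \<open>fa p\<close> \<open>fa q\<close> unfolding fa_def by simp
  show ?thesis
    apply (subst act_supset[OF fin], force simp: fa_sub_def)
    apply (subst act_supset[OF fin, of p], force)
    apply (subst act_supset[OF fin, of q], force)
    by (simp add: fa_sub_def sum_subtractf left_diff_distrib)
qed

lemma act_smult: "fa p \<Longrightarrow> act Lw (fa_smult c p) f = (\<lambda>m. c * act Lw p f m)"
proof -
  assume "fa p"
  let ?S = "{u. p u \<noteq> 0}"
  have fin: "finite ?S" using \<open>fa p\<close> unfolding fa_def by simp
  show ?thesis
    apply (subst act_supset[OF fin], force simp: fa_smult_def)
    apply (subst act_supset[OF fin, of p], force)
    by (simp add: fa_smult_def sum_distrib_left mult.assoc)
qed

lemma act_zero: "act Lw fa_zero f = (\<lambda>m. 0)"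
  unfolding act_def fa_zero_def by simp

lemma act_word: "act Lw (fa_word u) f = Lw u f"
proof -
  have "act Lw (fa_word u) f = (\<lambda>m. \<Sum>w\<in>{u}. fa_word u w * Lw w f m)"
    by (rule act_supset) (auto simp: fa_word_def)
  then show ?thesis by (simp add: fa_word_def)
qed

lemma act_sum: "finite S \<Longrightarrow> (\<And>i. i \<in> S \<Longrightarrow> fa (F i)) \<Longrightarrow>
   act Lw (fa_sum F S) f = (\<lambda>m. \<Sum>i\<in>S. act Lw (F i) f m)"
proof (induction S rule: finite_induct)
  case empty then show ?case by (simp add: act_zero)
next
  case (insert x S)
  then show ?case by (simp add: fa_sum_insert act_add)
qed

lemma lin_act: "(\<And>u. lin (Lw u)) \<Longrightarrow> lin (act Lw p)"
  unfolding lin_def act_def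
  by (auto simp: sum.distrib distrib_left sum_distrib_left mult.left_commute)

definition whom :: "('g list \<Rightarrow> 'm vec \<Rightarrow> 'm vec) \<Rightarrow> bool" where
  "whom Lw \<longleftrightarrow> (\<forall>u. lin (Lw u)) \<and> (\<forall>u v f. Lw (u @ v) f = Lw u (Lw v f))"

lemma fa_mult_restrict:
  assumes "{u. p u \<noteq> 0} \<subseteq> P" "{u. q u \<noteq> 0} \<subseteq> Q" "finite P" "finite Q"
  shows "fa_mult p q w = (\<Sum>x\<in>{x \<in> P \<times> Q. fst x @ snd x = w}. p (fst x) * q (snd x))"
proof -
  have "fa_mult p q w = (\<Sum>x\<in>{(u,v). u @ v = w}. p (fst x) * q (snd x))"
    unfolding fa_mult_def by (simp add: case_prod_beta)
  also have "\<dots> = (\<Sum>x\<in>{(u,v). u @ v = w} \<inter> (P \<times> Q). p (fst x) * q (snd x))"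
    by (rule sum.mono_neutral_right) (use assms in \<open>auto simp: finite_D2\<close>)
  also have "\<dots> = (\<Sum>x\<in>{x \<in> P \<times> Q. fst x @ snd x = w}. p (fst x) * q (snd x))"
    by (rule sum.cong) auto
  finally show ?thesis .
qed

lemma act_mult:
  assumes W: "whom Lw" and "fa p" "fa q"
  shows "act Lw (fa_mult p q) f = act Lw p (act Lw q f)"
proof (rule ext)
  fix m
  let ?P = "{u. p u \<noteq> 0}" and ?Q = "{u. q u \<noteq> 0}"
  let ?c = "\<lambda>x. fst x @ snd x"
  have fP: "finite ?P" and fQ: "finite ?Q" using assms unfolding fa_def by auto
  let ?S = "?c ` (?P \<times> ?Q)"
  have fS: "finite ?S" using fP fQ by simp
  have supp: "{w. fa_mult p q w \<noteq> 0} \<subseteq> ?S"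
  proof
    fix w assume "w \<in> {w. fa_mult p q w \<noteq> 0}"
    then obtain u v where "w = u @ v" "p u \<noteq> 0" "q v \<noteq> 0" using fa_mult_nz by blast
    then show "w \<in> ?S" by (intro image_eqI[where x="(u,v)"]) auto
  qed
  have "act Lw (fa_mult p q) f m = (\<Sum>w\<in>?S. fa_mult p q w * Lw w f m)"
    by (subst act_supset[OF fS supp]) simp
  also have "\<dots> = (\<Sum>w\<in>?S. \<Sum>x\<in>{x \<in> ?P \<times> ?Q. ?c x = w}. p (fst x) * q (snd x) * Lw (?c x) f m)"
    by (rule sum.cong[OF refl], subst fa_mult_restrict[OF subset_refl subset_refl fP fQ])
       (auto simp: sum_distrib_right)
  also have "\<dots> = (\<Sum>x\<in>?P \<times> ?Q. p (fst x) * q (snd x) * Lw (?c x) f m)"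
    by (rule sum.group) (use fP fQ in auto)
  also have "\<dots> = (\<Sum>u\<in>?P. \<Sum>v\<in>?Q. p u * q v * Lw u (Lw v f) m)"
    using W unfolding whom_def by (simp add: sum.cartesian_product case_prod_beta)
  also have "\<dots> = act Lw p (act Lw q f) m"
  proof -
    have "\<And>u. Lw u (act Lw q f) = (\<lambda>m. \<Sum>v\<in>?Q. q v * Lw u (Lw v f) m)"
    proof -
      fix u
      have "lin (Lw u)" using W unfolding whom_def by blast
      from lin_scal_sum[OF this fQ, of q "\<lambda>v. Lw v f"]
      show "Lw u (act Lw q f) = (\<lambda>m. \<Sum>v\<in>?Q. q v * Lw u (Lw v f) m)"
        unfolding act_def by simp
    qed
    then show ?thesis unfolding act_def by (simp add: sum_distrib_left mult.assoc)
  qed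
  finally show "act Lw (fa_mult p q) f m = act Lw p (act Lw q f) m" .
qed

primrec wop :: "('g \<Rightarrow> 'm vec \<Rightarrow> 'm vec) \<Rightarrow> 'g list \<Rightarrow> 'm vec \<Rightarrow> 'm vec" where
  "wop Lg [] f = f"
| "wop Lg (g # u) f = Lg g (wop Lg u f)"

lemma wop_append: "wop Lg (u @ v) f = wop Lg u (wop Lg v f)"
  by (induction u) auto

lemma lin_wop: "(\<And>g. lin (Lg g)) \<Longrightarrow> lin (wop Lg u)"
proof (induction u)
  case Nil then show ?case by (simp add: lin_id)
next
  case (Cons g u)
  have "lin (\<lambda>f. Lg g (wop Lg u f))" by (rule lin_comp[OF Cons.prems Cons.IH[OF Cons.prems]])
  moreover have "wop Lg (g # u) = (\<lambda>f. Lg g (wop Lg u f))" by (rule ext) simp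
  ultimately show ?case by simp
qed

lemma whom_wop: "(\<And>g. lin (Lg g)) \<Longrightarrow> whom (wop Lg)"
  unfolding whom_def using lin_wop wop_append by blast

lemma act_one: "whom Lw \<Longrightarrow> act Lw fa_one f = Lw [] f"
  by (simp add: fa_one_word act_word)

lemma act_one_wop: "act (wop Lg) fa_one f = f"
  by (simp add: fa_one_word act_word)

lemma act_gen_wop: "act (wop Lg) (fa_gen g) f = Lg g f"
  by (simp add: fa_gen_word act_word)

lemma act_pow: "whom Lw \<Longrightarrow> act Lw fa_one = (\<lambda>f. f) \<Longrightarrow> fa p \<Longrightarrow>
    act Lw (fa_pow p n) f = (act Lw p ^^ n) f"
proof (induction n arbitrary: f)
  case 0 then show ?case by simp
next
  case (Suc n)
  have "act Lw (fa_pow p (Suc n)) f = act Lw p (act Lw (fa_pow p n) f)"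
    using Suc.prems by (simp add: act_mult)
  then show ?case using Suc.IH[OF Suc.prems] by simp
qed

lemma act_ideal_zero:
  assumes "a \<in> fa_ideal R" "whom Lw" "\<And>r. r \<in> R \<Longrightarrow> fa r"
    "\<And>r f. r \<in> R \<Longrightarrow> act Lw r f = (\<lambda>m. 0)"
  shows "act Lw a f = (\<lambda>m. 0)"
  using assms(1) proof (induction arbitrary: f rule: fa_ideal.induct)
  case (gen r) then show ?case using assms by blast
next
  case zero then show ?case by (simp add: act_zero)
next
  case (add a b)
  have "fa a" "fa b" using add.hyps assms ideal_fa by blast+
  then show ?case using add.IH by (simp add: act_add)
next
  case (mult a u v)
  have fa: "fa a" using mult.hyps assms ideal_fa by blast
  have "act Lw (fa_mult (fa_mult u a) v) f = act Lw u (act Lw a (act Lw v f))"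
    using assms(2) mult.hyps fa by (simp add: act_mult)
  also have "\<dots> = act Lw u (\<lambda>m. 0)" using mult.IH by simp
  also have "\<dots> = (\<lambda>m. 0)" 
  proof (rule lin_zero, rule lin_act)
    fix w show "lin (Lw w)" using assms(2) unfolding whom_def by blast
  qed
  finally show ?case .
qed

lemma act_commute:
  assumes "fa p" "whom Lw" "lin Rop" "\<And>u f. Lw u (Rop f) = Rop (Lw u f)"
  shows "act Lw p (Rop f) = Rop (act Lw p f)"
proof -
  have fin: "finite {u. p u \<noteq> 0}" using assms unfolding fa_def by simp
  show ?thesis
    unfolding act_def using lin_scal_sum[OF assms(3) fin, of p "\<lambda>u. Lw u f"] assms(4) by simp
qed

lemma word_eval_fa[simp]: "(\<And>g. fa (h g)) \<Longrightarrow> fa (word_eval h w)"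
  by (induction w) auto

lemma word_eval_append: "word_eval h (u @ v) = fa_mult (word_eval h u) (word_eval h v)"
  by (induction u) (auto simp: fa_mult_assoc)

lemma fa_hom_sum: "fa_hom h p = fa_sum (\<lambda>w. fa_smult (p w) (word_eval h w)) {w. p w \<noteq> 0}"
  unfolding fa_hom_def fa_sum_def fa_smult_def by simp

lemma fa_hom_fa[simp]: "fa p \<Longrightarrow> (\<And>g. fa (h g)) \<Longrightarrow> fa (fa_hom h p)"
  unfolding fa_hom_sum by (rule fa_sumI) (auto simp: fa_def[of p])

lemma act_fa_hom:
  assumes "fa p" "\<And>g. fa (h g)"
  shows "act Lw (fa_hom h p) f = act (\<lambda>u. act Lw (word_eval h u)) p f"
proof -
  have fin: "finite {w. p w \<noteq> 0}" using assms unfolding fa_def by simp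
  have "act Lw (fa_hom h p) f =
      (\<lambda>m. \<Sum>w\<in>{w. p w \<noteq> 0}. act Lw (fa_smult (p w) (word_eval h w)) f m)"
    unfolding fa_hom_sum by (rule act_sum) (use assms fin in auto)
  also have "\<dots> = (\<lambda>m. \<Sum>w\<in>{w. p w \<noteq> 0}. p w * act Lw (word_eval h w) f m)"
    using assms by (simp add: act_smult)
  also have "\<dots> = act (\<lambda>u. act Lw (word_eval h u)) p f"
    by (simp only: act_def[where Lw="\<lambda>u. act Lw (word_eval h u)" and p=p])
  finally show ?thesis .
qed

lemma whom_hom:
  assumes "whom Lw" "\<And>g. fa (h g)"
  shows "whom (\<lambda>u. act Lw (word_eval h u))"
  unfolding whom_def
proof (intro conjI allI)
  fix u show "lin (act Lw (word_eval h u))"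
    using assms(1) unfolding whom_def by (intro lin_act) blast
next
  fix u v f
  show "act Lw (word_eval h (u @ v)) f = act Lw (word_eval h u) (act Lw (word_eval h v) f)"
    unfolding word_eval_append using assms by (intro act_mult) auto
qed

definition om :: "nat \<Rightarrow> complex" where "om N = xi N ^ 2"

lemma xi_cis: "xi N = cis (pi / real N)"
  unfolding xi_def cis_conv_exp by (simp add: mult.commute)

lemma om_cis: "om N = cis (2 * pi / real N)"
  unfolding om_def xi_cis DeMoivre by simp

lemma om_nz[simp]: "om N \<noteq> 0" unfolding om_cis by simp
lemma xi_nz[simp]: "xi N \<noteq> 0" unfolding xi_cis by simp

lemma xi_pow_N: "N \<ge> 1 \<Longrightarrow> xi N ^ N = -1"
  unfolding xi_cis DeMoivre by simp

lemma om_powi: "om N powi k = cis (2 * pi * real_of_int k / real N)"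
  unfolding om_cis cis_power_int by (simp add: mult.commute)

lemma om_powi_eq_1_iff: "N \<ge> 1 \<Longrightarrow> om N powi k = 1 \<longleftrightarrow> int N dvd k"
proof -
  assume N: "N \<ge> 1"
  have "om N powi k = 1 \<longleftrightarrow> (\<exists>n. 2 * pi * real_of_int k / real N = of_int n * (2 * pi))"
    unfolding om_powi cis_eq_1_iff ..
  also have "\<dots> \<longleftrightarrow> (\<exists>n. real_of_int k = of_int n * real N)"
    using N by (auto simp: field_simps)
  also have "\<dots> \<longleftrightarrow> (\<exists>n. k = n * int N)"
    by (metis of_int_eq_iff of_int_mult of_int_of_nat_eq)
  also have "\<dots> \<longleftrightarrow> int N dvd k" by (auto simp: dvd_def mult.commute)
  finally show ?thesis .
qed

lemma om_pow_eq_1_iff: "N \<ge> 1 \<Longrightarrow> om N ^ k = 1 \<longleftrightarrow> N dvd k"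
  using om_powi_eq_1_iff[of N "int k"] by simp

lemma om_powi_mult_N: "N \<ge> 1 \<Longrightarrow> om N powi (int N * k) = 1"
  using om_powi_eq_1_iff by simp

type_synonym tv = "(int \<times> int \<times> int) vec"

definition LW :: "complex \<Rightarrow> wgen \<Rightarrow> tv \<Rightarrow> tv" where
  "LW w g f = (\<lambda>(a,b,c). case g of
      WX \<Rightarrow> f (a - 1, b, c) | WXi \<Rightarrow> f (a + 1, b, c)
    | WY \<Rightarrow> w powi (- a) * f (a, b - 1, c) | WYi \<Rightarrow> w powi a * f (a, b + 1, c)
    | WZ \<Rightarrow> f (a, b, c - 1) | WZi \<Rightarrow> f (a, b, c + 1))"

definition RW :: "complex \<Rightarrow> wgen \<Rightarrow> tv \<Rightarrow> tv" where
  "RW w g f = (\<lambda>(a,b,c). case g of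
      WX \<Rightarrow> w powi (- b) * f (a - 1, b, c) | WXi \<Rightarrow> w powi b * f (a + 1, b, c)
    | WY \<Rightarrow> f (a, b - 1, c) | WYi \<Rightarrow> f (a, b + 1, c)
    | WZ \<Rightarrow> f (a, b, c - 1) | WZi \<Rightarrow> f (a, b, c + 1))"

lemma LW_simps[simp]:
  "LW w WX f (a,b,c) = f (a - 1, b, c)" "LW w WXi f (a,b,c) = f (a + 1, b, c)"
  "LW w WY f (a,b,c) = w powi (- a) * f (a, b - 1, c)" "LW w WYi f (a,b,c) = w powi a * f (a, b + 1, c)"
  "LW w WZ f (a,b,c) = f (a, b, c - 1)" "LW w WZi f (a,b,c) = f (a, b, c + 1)"
  unfolding LW_def by simp_all

lemma RW_simps[simp]:
  "RW w WX f (a,b,c) = w powi (- b) * f (a - 1, b, c)" "RW w WXi f (a,b,c) = w powi b * f (a + 1, b, c)"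
  "RW w WY f (a,b,c) = f (a, b - 1, c)" "RW w WYi f (a,b,c) = f (a, b + 1, c)"
  "RW w WZ f (a,b,c) = f (a, b, c - 1)" "RW w WZi f (a,b,c) = f (a, b, c + 1)"
  unfolding RW_def by simp_all

lemma tv_ext: "(\<And>a b c. f (a,b,c) = g (a,b,c)) \<Longrightarrow> f = g"
  by (rule ext) auto

lemma lin_LW: "lin (LW w g)"
  unfolding lin_def by (cases g) (auto intro!: tv_ext simp: algebra_simps)
lemma lin_RW: "lin (RW w g)"
  unfolding lin_def by (cases g) (auto intro!: tv_ext simp: algebra_simps)

lemma powi_simps:
  fixes w :: complex
  assumes "w \<noteq> 0"
  shows "w powi (k + 1) = w powi k * w" "w powi (k - 1) = w powi k / w"
    "w powi (- k) = inverse (w powi k)" "w powi (1 - k) = w / w powi k"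
    "w powi (- k - 1) = inverse (w powi k * w)"
  using assms by (simp_all add: power_int_add power_int_diff power_int_minus field_simps)

lemma LR_comm: "w \<noteq> 0 \<Longrightarrow> LW w g (RW w h f) = RW w h (LW w g f)"
  by (rule tv_ext, cases g; cases h) (auto simp: powi_simps field_simps)

definition d0 :: tv where "d0 = (\<lambda>m. if m = (0,0,0) then 1 else 0)"

lemma LR_d0: "LW w g d0 = RW w g d0"
  by (rule tv_ext, cases g) (auto simp: d0_def)


lemma whom_W: "whom (wop (LW w))" by (rule whom_wop) (rule lin_LW)

lemma act_gen2: "act (wop L) (fa_mult (fa_gen g) (fa_gen h)) f = L g (L h f)"
  by (simp add: fa_gen_word fa_word_mult act_word)

lemma W_rels_fa: "r \<in> W_rels N \<Longrightarrow> fa r"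
  unfolding W_rels_def Let_def by auto

lemma W_rels_act:
  assumes "r \<in> W_rels N"
  shows "act (wop (LW (om N))) r f = (\<lambda>m. 0)"
proof -
  have q2: "xi N ^ 2 = om N" by (simp add: om_def)
  have nz: "om N \<noteq> 0" by simp
  from assms show ?thesis
    unfolding W_rels_def Let_def
    apply (simp only: Un_iff insert_iff mem_Collect_eq empty_iff)
    apply (elim disjE exE conjE)
    by (auto intro!: tv_ext simp: act_sub act_smult act_gen2 act_one_wop q2 powi_simps field_simps)
qed

definition rhoW :: "nat \<Rightarrow> wgen fa \<Rightarrow> tv" where
  "rhoW N p = act (wop (LW (om N))) p d0"

lemma rhoW_ideal: "a \<in> W_ideal N \<Longrightarrow> act (wop (LW (om N))) a f = (\<lambda>m. 0)"
  unfolding W_ideal_def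
  by (rule act_ideal_zero[OF _ whom_W]) (auto simp: W_rels_fa W_rels_act)

lemma W_ideal_fa: "a \<in> W_ideal N \<Longrightarrow> fa a"
  unfolding W_ideal_def by (rule ideal_fa) (auto simp: W_rels_fa)

abbreviation "gX \<equiv> fa_gen WX"
abbreviation "gXi \<equiv> fa_gen WXi"
abbreviation "gY \<equiv> fa_gen WY"
abbreviation "gYi \<equiv> fa_gen WYi"
abbreviation "gZ \<equiv> fa_gen WZ"
abbreviation "gZi \<equiv> fa_gen WZi"

lemma fcong_rel: "fa_sub a b \<in> R \<Longrightarrow> fcong R a b"
  unfolding fcong_def by (rule fa_ideal.gen)

lemma q2: "xi N ^ 2 = om N" by (simp add: om_def)

lemma W_basic:
  "fcong (W_rels N) (fa_mult gX gXi) fa_one"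
  "fcong (W_rels N) (fa_mult gXi gX) fa_one"
  "fcong (W_rels N) (fa_mult gY gYi) fa_one"
  "fcong (W_rels N) (fa_mult gYi gY) fa_one"
  "fcong (W_rels N) (fa_mult gZ gZi) fa_one"
  "fcong (W_rels N) (fa_mult gZi gZ) fa_one"
  "fcong (W_rels N) (fa_mult gX gY) (fa_smult (om N) (fa_mult gY gX))"
  "g \<in> {gX, gXi, gY, gYi} \<Longrightarrow> fcong (W_rels N) (fa_mult gZ g) (fa_mult g gZ)"
  by (rule fcong_rel; auto simp: W_rels_def Let_def q2)+

lemma cancel_left: "fcong R (fa_mult a b) fa_one \<Longrightarrow> fa c \<Longrightarrow>
    fcong R (fa_mult a (fa_mult b c)) c"
  using fcong_mult_right[of c R "fa_mult a b" fa_one] by (simp add: fa_mult_assoc)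
lemma cancel_right: "fcong R (fa_mult a b) fa_one \<Longrightarrow> fa c \<Longrightarrow>
    fcong R (fa_mult (fa_mult c a) b) c"
  using fcong_mult_left[of c R "fa_mult a b" fa_one] by (simp add: fa_mult_assoc)

lemma sandwich: "fcong R a b \<Longrightarrow> fa u \<Longrightarrow> fa v \<Longrightarrow>
    fcong R (fa_mult u (fa_mult a v)) (fa_mult u (fa_mult b v))"
  by (intro fcong_mult_left fcong_mult_right) auto

lemma W_derived:
  "fcong (W_rels N) (fa_mult gY gX) (fa_smult (inverse (om N)) (fa_mult gX gY))"
  "fcong (W_rels N) (fa_mult gY gXi) (fa_smult (om N) (fa_mult gXi gY))"
  "fcong (W_rels N) (fa_mult gYi gX) (fa_smult (om N) (fa_mult gX gYi))"
  "fcong (W_rels N) (fa_mult gYi gXi) (fa_smult (inverse (om N)) (fa_mult gXi gYi))"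
  "g \<in> {gX, gXi, gY, gYi} \<Longrightarrow> fcong (W_rels N) (fa_mult gZi g) (fa_mult g gZi)"
proof -
  let ?R = "W_rels N"
  have nz: "om N \<noteq> 0" by simp
  note B = W_basic[where N=N]
  show 1: "fcong ?R (fa_mult gY gX) (fa_smult (inverse (om N)) (fa_mult gX gY))"
  proof -
    have "fcong ?R (fa_smult (inverse (om N)) (fa_mult gX gY))
        (fa_smult (inverse (om N)) (fa_smult (om N) (fa_mult gY gX)))"
      by (rule fcong_smult[OF B(7)])
    then show ?thesis using nz by (simp add: fcong_sym)
  qed
  show 2: "fcong ?R (fa_mult gY gXi) (fa_smult (om N) (fa_mult gXi gY))"
  proof -
    have "fcong ?R (fa_mult gXi (fa_mult (fa_mult gX gY) gXi))
                   (fa_mult gXi (fa_mult (fa_smult (om N) (fa_mult gY gX)) gXi))"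
      by (rule sandwich[OF B(7)]) auto
    moreover have "fcong ?R (fa_mult gXi (fa_mult (fa_mult gX gY) gXi)) (fa_mult gY gXi)"
      using cancel_left[OF B(2), of "fa_mult gY gXi"] by (simp add: fa_mult_assoc)
    moreover have "fcong ?R (fa_mult gXi (fa_mult (fa_smult (om N) (fa_mult gY gX)) gXi))
        (fa_smult (om N) (fa_mult gXi gY))"
      using fcong_smult[OF cancel_right[OF B(1), of "fa_mult gXi gY"], of "om N"]
      by (simp add: fa_mult_assoc fa_mult_smult_left fa_mult_smult_right)
    ultimately show ?thesis by (meson fcong_sym fcong_trans)
  qed
  show "fcong ?R (fa_mult gYi gX) (fa_smult (om N) (fa_mult gX gYi))"
  proof -
    have "fcong ?R (fa_mult gYi (fa_mult (fa_mult gX gY) gYi))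
                   (fa_mult gYi (fa_mult (fa_smult (om N) (fa_mult gY gX)) gYi))"
      by (rule sandwich[OF B(7)]) auto
    moreover have "fcong ?R (fa_mult gYi (fa_mult (fa_mult gX gY) gYi)) (fa_mult gYi gX)"
      using cancel_right[OF B(3), of "fa_mult gYi gX"] by (simp add: fa_mult_assoc)
    moreover have "fcong ?R (fa_mult gYi (fa_mult (fa_smult (om N) (fa_mult gY gX)) gYi))
        (fa_smult (om N) (fa_mult gX gYi))"
      using fcong_smult[OF cancel_left[OF B(4), of "fa_mult gX gYi"], of "om N"]
      by (simp add: fa_mult_assoc fa_mult_smult_left fa_mult_smult_right)
    ultimately show ?thesis by (meson fcong_sym fcong_trans)
  qed
  show "fcong ?R (fa_mult gYi gXi) (fa_smult (inverse (om N)) (fa_mult gXi gYi))"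
  proof -
    have "fcong ?R (fa_mult gYi (fa_mult (fa_mult gY gXi) gYi))
                   (fa_mult gYi (fa_mult (fa_smult (om N) (fa_mult gXi gY)) gYi))"
      by (rule sandwich[OF 2]) auto
    moreover have "fcong ?R (fa_mult gYi (fa_mult (fa_mult gY gXi) gYi)) (fa_mult gXi gYi)"
      using cancel_left[OF B(4), of "fa_mult gXi gYi"] by (simp add: fa_mult_assoc)
    moreover have "fcong ?R (fa_mult gYi (fa_mult (fa_smult (om N) (fa_mult gXi gY)) gYi))
        (fa_smult (om N) (fa_mult gYi gXi))"
      using fcong_smult[OF cancel_right[OF B(3), of "fa_mult gYi gXi"], of "om N"]
      by (simp add: fa_mult_assoc fa_mult_smult_left fa_mult_smult_right)
    ultimately have "fcong ?R (fa_mult gXi gYi) (fa_smult (om N) (fa_mult gYi gXi))"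
      by (meson fcong_sym fcong_trans)
    then have "fcong ?R (fa_smult (inverse (om N)) (fa_mult gXi gYi))
        (fa_smult (inverse (om N)) (fa_smult (om N) (fa_mult gYi gXi)))"
      by (rule fcong_smult)
    then show ?thesis using nz by (simp add: fcong_sym)
  qed
  assume g: "g \<in> {gX, gXi, gY, gYi}"
  then have fg: "fa g" by auto
  have "fcong ?R (fa_mult gZi (fa_mult (fa_mult gZ g) gZi))
                 (fa_mult gZi (fa_mult (fa_mult g gZ) gZi))"
    by (rule sandwich[OF B(8)[OF g]]) auto
  moreover have "fcong ?R (fa_mult gZi (fa_mult (fa_mult gZ g) gZi)) (fa_mult g gZi)"
    using cancel_left[OF B(6), of "fa_mult g gZi"] fg by (simp add: fa_mult_assoc)
  moreover have "fcong ?R (fa_mult gZi (fa_mult (fa_mult g gZ) gZi)) (fa_mult gZi g)"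
    using cancel_right[OF B(5), of "fa_mult gZi g"] fg by (simp add: fa_mult_assoc)
  ultimately show "fcong ?R (fa_mult gZi g) (fa_mult g gZi)"
    by (meson fcong_sym fcong_trans)
qed

definition ipow :: "'g fa \<Rightarrow> 'g fa \<Rightarrow> int \<Rightarrow> 'g fa" where
  "ipow a a' k = (if 0 \<le> k then fa_pow a (nat k) else fa_pow a' (nat (- k)))"

lemma ipow_fa[simp]: "fa a \<Longrightarrow> fa a' \<Longrightarrow> fa (ipow a a' k)"
  unfolding ipow_def by auto

lemma ipow_swap: "ipow a a' k = ipow a' a (- k)"
  unfolding ipow_def by auto

lemma ipow_step:
  assumes "fcong R (fa_mult a a') fa_one" "fa a" "fa a'"
  shows "fcong R (fa_mult a (ipow a a' k)) (ipow a a' (k + 1))"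
proof (cases "0 \<le> k")
  case True
  then have "fa_mult a (ipow a a' k) = ipow a a' (k + 1)"
    unfolding ipow_def by (simp add: nat_add_distrib)
  then show ?thesis by simp
next
  case False
  define n where "n = nat (- k - 1)"
  have n: "k = - int n - 1" using False unfolding n_def by simp
  then have "ipow a a' k = fa_pow a' (Suc n)" unfolding ipow_def by (simp add: nat_add_distrib)
  then have "fa_mult a (ipow a a' k) = fa_mult (fa_mult a a') (fa_pow a' n)"
    by (simp add: fa_mult_assoc)
  also have "fcong R \<dots> (fa_mult fa_one (fa_pow a' n))"
    using assms by (intro fcong_mult_right) auto
  also have "fa_mult fa_one (fa_pow a' n) = ipow a a' (k + 1)"
    using n unfolding ipow_def by auto
  finally show ?thesis .
qed

lemma ipow_step':
  assumes "fcong R (fa_mult a' a) fa_one" "fa a" "fa a'"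
  shows "fcong R (fa_mult a' (ipow a a' k)) (ipow a a' (k - 1))"
  using ipow_step[OF assms(1,3,2), of "- k"] by (simp add: ipow_swap[of a a'])

lemma ipow_comm:
  assumes "fcong R (fa_mult c a) (fa_smult s (fa_mult a c))"
    "fcong R (fa_mult c a') (fa_smult s' (fa_mult a' c))" "fa a" "fa a'" "fa c"
  shows "\<exists>t. fcong R (fa_mult c (ipow a a' k)) (fa_smult t (fa_mult (ipow a a' k) c))"
  unfolding ipow_def using fcong_comm_pow[OF assms(5,3,1)] fcong_comm_pow[OF assms(5,4,2)]
  by auto

definition Mon :: "int \<times> int \<times> int \<Rightarrow> wgen fa" where
  "Mon m = (case m of (a,b,c) \<Rightarrow>
     fa_mult (ipow gX gXi a) (fa_mult (ipow gY gYi b) (ipow gZ gZi c)))"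

lemma Mon_fa[simp]: "fa (Mon m)" unfolding Mon_def by (auto split: prod.splits)

lemma pass0: "fcong R (fa_mult c A) A' \<Longrightarrow> fa B \<Longrightarrow>
    fcong R (fa_mult c (fa_mult A B)) (fa_mult A' B)"
  using fcong_mult_right[of B R "fa_mult c A" A'] by (simp add: fa_mult_assoc)

lemma pass:
  assumes "fcong R (fa_mult c A) (fa_smult s (fa_mult A c))"
    "fcong R (fa_mult c B) (fa_smult t B')" "fa A" "fa B" "fa c" "fa B'"
  shows "fcong R (fa_mult c (fa_mult A B)) (fa_smult (s * t) (fa_mult A B'))"
proof -
  have "fa_mult c (fa_mult A B) = fa_mult (fa_mult c A) B" by (simp add: fa_mult_assoc)
  also have "fcong R \<dots> (fa_mult (fa_smult s (fa_mult A c)) B)"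
    using assms by (intro fcong_mult_right) auto
  also have "\<dots> = fa_smult s (fa_mult A (fa_mult c B))"
    by (simp add: fa_mult_assoc fa_mult_smult_left)
  also have "fcong R \<dots> (fa_smult s (fa_mult A (fa_smult t B')))"
    using assms by (intro fcong_smult fcong_mult_left) auto
  also have "\<dots> = fa_smult (s * t) (fa_mult A B')"
    by (simp add: fa_mult_smult_right)
  finally show ?thesis .
qed

lemma gen_Mon: "\<exists>s m'. fcong (W_rels N) (fa_mult (fa_gen g) (Mon m)) (fa_smult s (Mon m'))"
proof -
  obtain a b c where m: "m = (a,b,c)" by (cases m) auto
  let ?R = "W_rels N"
  note B = W_basic[where N=N] and D = W_derived[where N=N]
  let ?X = "ipow gX gXi a" and ?Y = "ipow gY gYi b" and ?Z = "ipow gZ gZi c"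
  have M: "Mon m = fa_mult ?X (fa_mult ?Y ?Z)" unfolding Mon_def m by simp
  have zY: "\<exists>t. fcong ?R (fa_mult gZ ?Y) (fa_smult t (fa_mult ?Y gZ))"
    by (rule ipow_comm[where s=1 and s'=1]) (use B(8) in auto)
  have zX: "\<exists>t. fcong ?R (fa_mult gZ ?X) (fa_smult t (fa_mult ?X gZ))"
    by (rule ipow_comm[where s=1 and s'=1]) (use B(8) in auto)
  have ziY: "\<exists>t. fcong ?R (fa_mult gZi ?Y) (fa_smult t (fa_mult ?Y gZi))"
    by (rule ipow_comm[where s=1 and s'=1]) (use D(5) in auto)
  have ziX: "\<exists>t. fcong ?R (fa_mult gZi ?X) (fa_smult t (fa_mult ?X gZi))"
    by (rule ipow_comm[where s=1 and s'=1]) (use D(5) in auto)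
  have yX: "\<exists>t. fcong ?R (fa_mult gY ?X) (fa_smult t (fa_mult ?X gY))"
    by (rule ipow_comm) (use D in auto)
  have yiX: "\<exists>t. fcong ?R (fa_mult gYi ?X) (fa_smult t (fa_mult ?X gYi))"
    by (rule ipow_comm) (use D in auto)
  show ?thesis
  proof (cases g)
    case WX
    have "fcong ?R (fa_mult gX (Mon m)) (fa_mult (ipow gX gXi (a + 1)) (fa_mult ?Y ?Z))"
      unfolding M by (rule pass0[OF ipow_step[OF B(1)]]) auto
    then have "fcong ?R (fa_mult (fa_gen g) (Mon m)) (fa_smult 1 (Mon (a + 1, b, c)))"
      using WX by (simp add: Mon_def)
    then show ?thesis by blast
  next
    case WXi
    have "fcong ?R (fa_mult gXi (Mon m)) (fa_mult (ipow gX gXi (a - 1)) (fa_mult ?Y ?Z))"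
      unfolding M by (rule pass0[OF ipow_step'[OF B(2)]]) auto
    then have "fcong ?R (fa_mult (fa_gen g) (Mon m)) (fa_smult 1 (Mon (a - 1, b, c)))"
      using WXi by (simp add: Mon_def)
    then show ?thesis by blast
  next
    case WY
    obtain s where s: "fcong ?R (fa_mult gY ?X) (fa_smult s (fa_mult ?X gY))" using yX by blast
    have 2: "fcong ?R (fa_mult gY (fa_mult ?Y ?Z)) (fa_smult 1 (fa_mult (ipow gY gYi (b + 1)) ?Z))"
      using pass0[OF ipow_step[OF B(3)], of ?Z] by simp
    have "fcong ?R (fa_mult gY (Mon m)) (fa_smult (s * 1) (fa_mult ?X (fa_mult (ipow gY gYi (b + 1)) ?Z)))"
      unfolding M by (rule pass[OF s 2]) auto
    then have "fcong ?R (fa_mult (fa_gen g) (Mon m)) (fa_smult s (Mon (a, b + 1, c)))"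
      using WY by (simp add: Mon_def)
    then show ?thesis by blast
  next
    case WYi
    obtain s where s: "fcong ?R (fa_mult gYi ?X) (fa_smult s (fa_mult ?X gYi))" using yiX by blast
    have 2: "fcong ?R (fa_mult gYi (fa_mult ?Y ?Z)) (fa_smult 1 (fa_mult (ipow gY gYi (b - 1)) ?Z))"
      using pass0[OF ipow_step'[OF B(4)], of ?Z] by simp
    have "fcong ?R (fa_mult gYi (Mon m)) (fa_smult (s * 1) (fa_mult ?X (fa_mult (ipow gY gYi (b - 1)) ?Z)))"
      unfolding M by (rule pass[OF s 2]) auto
    then have "fcong ?R (fa_mult (fa_gen g) (Mon m)) (fa_smult s (Mon (a, b - 1, c)))"
      using WYi by (simp add: Mon_def)
    then show ?thesis by blast
  next
    case WZ
    obtain s where s: "fcong ?R (fa_mult gZ ?X) (fa_smult s (fa_mult ?X gZ))" using zX by blast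
    obtain t where t: "fcong ?R (fa_mult gZ ?Y) (fa_smult t (fa_mult ?Y gZ))" using zY by blast
    have 3: "fcong ?R (fa_mult gZ ?Z) (fa_smult 1 (ipow gZ gZi (c + 1)))"
      using ipow_step[OF B(5)] by simp
    have 2: "fcong ?R (fa_mult gZ (fa_mult ?Y ?Z)) (fa_smult (t * 1) (fa_mult ?Y (ipow gZ gZi (c + 1))))"
      by (rule pass[OF t 3]) auto
    have "fcong ?R (fa_mult gZ (Mon m)) (fa_smult (s * (t * 1)) (fa_mult ?X (fa_mult ?Y (ipow gZ gZi (c + 1)))))"
      unfolding M by (rule pass[OF s 2]) auto
    then have "fcong ?R (fa_mult (fa_gen g) (Mon m)) (fa_smult (s * t) (Mon (a, b, c + 1)))"
      using WZ by (simp add: Mon_def)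
    then show ?thesis by blast
  next
    case WZi
    obtain s where s: "fcong ?R (fa_mult gZi ?X) (fa_smult s (fa_mult ?X gZi))" using ziX by blast
    obtain t where t: "fcong ?R (fa_mult gZi ?Y) (fa_smult t (fa_mult ?Y gZi))" using ziY by blast
    have 3: "fcong ?R (fa_mult gZi ?Z) (fa_smult 1 (ipow gZ gZi (c - 1)))"
      using ipow_step'[OF B(6)] by simp
    have 2: "fcong ?R (fa_mult gZi (fa_mult ?Y ?Z)) (fa_smult (t * 1) (fa_mult ?Y (ipow gZ gZi (c - 1))))"
      by (rule pass[OF t 3]) auto
    have "fcong ?R (fa_mult gZi (Mon m)) (fa_smult (s * (t * 1)) (fa_mult ?X (fa_mult ?Y (ipow gZ gZi (c - 1)))))"
      unfolding M by (rule pass[OF s 2]) auto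
    then have "fcong ?R (fa_mult (fa_gen g) (Mon m)) (fa_smult (s * t) (Mon (a, b, c - 1)))"
      using WZi by (simp add: Mon_def)
    then show ?thesis by blast
  qed
qed

lemma word_Mon: "\<exists>s m. fcong (W_rels N) (fa_word u) (fa_smult s (Mon m))"
proof (induction u)
  case Nil
  have "fa_word [] = fa_smult 1 (Mon (0,0,0))"
    by (simp add: Mon_def ipow_def fa_one_word[symmetric])
  then show ?case by (metis fcong_refl)
next
  case (Cons g u)
  then obtain s m where sm: "fcong (W_rels N) (fa_word u) (fa_smult s (Mon m))" by blast
  obtain s' m' where sm': "fcong (W_rels N) (fa_mult (fa_gen g) (Mon m)) (fa_smult s' (Mon m'))"
    using gen_Mon by blast
  have "fa_word (g # u) = fa_mult (fa_gen g) (fa_word u)"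
    by (simp add: fa_gen_word fa_word_mult)
  also have "fcong (W_rels N) \<dots> (fa_mult (fa_gen g) (fa_smult s (Mon m)))"
    by (rule fcong_mult_left[OF _ sm]) simp
  also have "\<dots> = fa_smult s (fa_mult (fa_gen g) (Mon m))" by (simp add: fa_mult_smult_right)
  also have "fcong (W_rels N) \<dots> (fa_smult s (fa_smult s' (Mon m')))"
    by (rule fcong_smult[OF sm'])
  also have "\<dots> = fa_smult (s * s') (Mon m')" by simp
  finally show ?case by blast
qed

lemma fa_expand: "fa t \<Longrightarrow> t = fa_sum (\<lambda>u. fa_smult (t u) (fa_word u)) {u. t u \<noteq> 0}"
proof (rule ext)
  fix w assume "fa t"
  then have fin: "finite {u. t u \<noteq> 0}" unfolding fa_def .
  have "fa_sum (\<lambda>u. fa_smult (t u) (fa_word u)) {u. t u \<noteq> 0} w =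
      (\<Sum>u\<in>{u. t u \<noteq> 0}. if u = w then t w else 0)"
    unfolding fa_sum_def fa_smult_def fa_word_def by (rule sum.cong) auto
  also have "\<dots> = t w" using fin by (subst sum.delta) auto
  finally show "t w = fa_sum (\<lambda>u. fa_smult (t u) (fa_word u)) {u. t u \<noteq> 0} w" by simp
qed

lemma span1:
  assumes "fa t"
  shows "\<exists>F c. finite F \<and> fcong (W_rels N) t (fa_sum (\<lambda>m. fa_smult (c m) (Mon m)) F)"
proof -
  let ?R = "W_rels N"
  have "\<forall>u. \<exists>p. fcong ?R (fa_word u) (fa_smult (fst p) (Mon (snd p)))"
  proof
    fix u
    obtain s m where "fcong ?R (fa_word u) (fa_smult s (Mon m))" using word_Mon by blast
    then show "\<exists>p. fcong ?R (fa_word u) (fa_smult (fst p) (Mon (snd p)))"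
      by (intro exI[of _ "(s,m)"]) simp
  qed
  from choice[OF this] obtain P where P0: "\<forall>u. fcong ?R (fa_word u) (fa_smult (fst (P u)) (Mon (snd (P u))))"
    by blast
  then have P: "\<And>u. fcong ?R (fa_word u) (fa_smult (fst (P u)) (Mon (snd (P u))))" by blast
  let ?U = "{u. t u \<noteq> 0}"
  have fin: "finite ?U" using assms unfolding fa_def .
  have "t = fa_sum (\<lambda>u. fa_smult (t u) (fa_word u)) ?U" by (rule fa_expand[OF assms])
  also have "fcong ?R \<dots> (fa_sum (\<lambda>u. fa_smult (t u) (fa_smult (fst (P u)) (Mon (snd (P u))))) ?U)"
    by (rule fcong_sum[OF fin]) (rule fcong_smult[OF P])
  also have "\<dots> = fa_sum (\<lambda>m. fa_smult (\<Sum>u\<in>{u \<in> ?U. snd (P u) = m}. t u * fst (P u)) (Mon m))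
                        (snd ` P ` ?U)"
  proof (rule ext)
    fix w
    have "fa_sum (\<lambda>u. fa_smult (t u) (fa_smult (fst (P u)) (Mon (snd (P u))))) ?U w =
        (\<Sum>u\<in>?U. t u * fst (P u) * Mon (snd (P u)) w)"
      unfolding fa_sum_def fa_smult_def by (simp add: mult.assoc)
    also have "\<dots> = (\<Sum>m\<in>snd ` P ` ?U. \<Sum>u\<in>{u \<in> ?U. snd (P u) = m}. t u * fst (P u) * Mon (snd (P u)) w)"
      by (rule sum.group[symmetric]) (use fin in auto)
    also have "\<dots> = (\<Sum>m\<in>snd ` P ` ?U. (\<Sum>u\<in>{u \<in> ?U. snd (P u) = m}. t u * fst (P u)) * Mon m w)"
      by (rule sum.cong[OF refl]) (simp add: sum_distrib_right)
    finally show "fa_sum (\<lambda>u. fa_smult (t u) (fa_smult (fst (P u)) (Mon (snd (P u))))) ?U w =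
       fa_sum (\<lambda>m. fa_smult (\<Sum>u\<in>{u \<in> ?U. snd (P u) = m}. t u * fst (P u)) (Mon m)) (snd ` P ` ?U) w"
      unfolding fa_sum_def fa_smult_def by simp
  qed
  finally have "fcong ?R t (fa_sum (\<lambda>m. fa_smult ((\<lambda>m. \<Sum>u\<in>{u \<in> ?U. snd (P u) = m}. t u * fst (P u)) m) (Mon m))
                        (snd ` P ` ?U))" by simp
  moreover have "finite (snd ` P ` ?U)" using fin by simp
  ultimately show ?thesis by (intro exI conjI)
qed

section \<open>Action on monomials\<close>

lemma LW_pow:
  fixes w :: complex
  assumes "w \<noteq> 0"
  shows "(LW w WX ^^ n) f (a,b,c) = f (a - int n, b, c)"
    "(LW w WXi ^^ n) f (a,b,c) = f (a + int n, b, c)"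
    "(LW w WY ^^ n) f (a,b,c) = (w powi (- a)) ^ n * f (a, b - int n, c)"
    "(LW w WYi ^^ n) f (a,b,c) = (w powi a) ^ n * f (a, b + int n, c)"
    "(LW w WZ ^^ n) f (a,b,c) = f (a, b, c - int n)"
    "(LW w WZi ^^ n) f (a,b,c) = f (a, b, c + int n)"
  by (induction n arbitrary: a b c)
     (auto simp: algebra_simps)

lemma act_fa_pow_W: "act (wop (LW w)) (fa_pow (fa_gen g) n) f = (LW w g ^^ n) f"
proof -
  have e1: "act (wop (LW w)) fa_one = (\<lambda>f. f)" by (rule ext) (simp add: act_one_wop)
  have e2: "act (wop (LW w)) (fa_gen g) = LW w g" by (rule ext) (simp add: act_gen_wop)
  show ?thesis by (simp add: act_pow[OF whom_W e1] e2)
qed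

lemma act_ipow_W:
  fixes w :: complex
  assumes "w \<noteq> 0"
  shows "act (wop (LW w)) (ipow gX gXi k) f (a,b,c) = f (a - k, b, c)"
    "act (wop (LW w)) (ipow gY gYi k) f (a,b,c) =
       (if 0 \<le> k then (w powi (- a)) ^ nat k else (w powi a) ^ nat (- k)) * f (a, b - k, c)"
    "act (wop (LW w)) (ipow gZ gZi k) f (a,b,c) = f (a, b, c - k)"
  unfolding ipow_def by (auto simp: act_fa_pow_W LW_pow[OF assms])

lemma act_mult_W: "fa p \<Longrightarrow> fa q \<Longrightarrow> act (wop (LW w)) (fa_mult p q) f = act (wop (LW w)) p (act (wop (LW w)) q f)"
  by (rule act_mult[OF whom_W])

lemma rho_Mon: "rhoW N (Mon m) = (\<lambda>m'. if m' = m then 1 else 0)"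
proof (rule tv_ext)
  fix a b c
  obtain a0 b0 c0 where m: "m = (a0,b0,c0)" by (cases m) auto
  have nz: "om N \<noteq> 0" by simp
  show "rhoW N (Mon m) (a,b,c) = (if (a,b,c) = m then 1 else 0)"
    unfolding rhoW_def m Mon_def
    by (simp add: act_mult_W act_ipow_W[OF nz] d0_def)
qed

lemma rho_sum: "finite F \<Longrightarrow> (\<And>m. m \<in> F \<Longrightarrow> fa (G m)) \<Longrightarrow>
    rhoW N (fa_sum (\<lambda>m. fa_smult (c m) (G m)) F) = (\<lambda>m'. \<Sum>m\<in>F. c m * rhoW N (G m) m')"
  unfolding rhoW_def by (simp add: act_sum act_smult)

lemma rho_sub: "fa p \<Longrightarrow> fa q \<Longrightarrow> rhoW N (fa_sub p q) = (\<lambda>m. rhoW N p m - rhoW N q m)"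
  unfolding rhoW_def by (simp add: act_sub)

lemma rho_fcong: "fcong (W_rels N) p q \<Longrightarrow> fa p \<Longrightarrow> fa q \<Longrightarrow> rhoW N p = rhoW N q"
proof -
  assume "fcong (W_rels N) p q" "fa p" "fa q"
  then have "rhoW N (fa_sub p q) = (\<lambda>m. 0)"
    unfolding rhoW_def fcong_def using rhoW_ideal[unfolded W_ideal_def] by blast
  then have h: "(\<lambda>m. rhoW N p m - rhoW N q m) = (\<lambda>m. 0)"
    using rho_sub[OF \<open>fa p\<close> \<open>fa q\<close>, of N] by simp
  show ?thesis
  proof (rule ext)
    fix m show "rhoW N p m = rhoW N q m" using fun_cong[OF h, of m] by simp
  qed
qed

lemma span2:
  assumes "fa t"
  shows "\<exists>F. finite F \<and> (\<forall>m. m \<notin> F \<longrightarrow> rhoW N t m = 0) \<and>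
             fcong (W_rels N) t (fa_sum (\<lambda>m. fa_smult (rhoW N t m) (Mon m)) F)"
proof -
  obtain F c where F: "finite F" and tc: "fcong (W_rels N) t (fa_sum (\<lambda>m. fa_smult (c m) (Mon m)) F)"
    using span1[OF assms] by blast
  have r: "rhoW N t = rhoW N (fa_sum (\<lambda>m. fa_smult (c m) (Mon m)) F)"
    by (rule rho_fcong[OF tc assms]) (use F in auto)
  also have "\<dots> = (\<lambda>m'. if m' \<in> F then c m' else 0)"
    using F by (simp add: rho_sum rho_Mon if_distrib[of "\<lambda>x. c _ * x"] sum.delta' cong: if_cong)
  finally have r': "rhoW N t = (\<lambda>m'. if m' \<in> F then c m' else 0)" .
  have "fa_sum (\<lambda>m. fa_smult (c m) (Mon m)) F = fa_sum (\<lambda>m. fa_smult (rhoW N t m) (Mon m)) F"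
    unfolding fa_sum_def r' by (rule ext, rule sum.cong) auto
  then show ?thesis using F tc r' by auto
qed

lemma rho_zero_ideal:
  assumes "fa t" "rhoW N t = (\<lambda>m. 0)"
  shows "t \<in> W_ideal N"
proof -
  obtain F where F: "fcong (W_rels N) t (fa_sum (\<lambda>m. fa_smult (rhoW N t m) (Mon m)) F)"
    using span2[OF assms(1)] by blast
  have "fa_sum (\<lambda>m. fa_smult (rhoW N t m) (Mon m)) F = fa_zero"
    unfolding assms(2) fa_sum_def fa_smult_def fa_zero_def by simp
  then show ?thesis using F fcong_zero_iff unfolding W_ideal_def by metis
qed

definition centralV :: "complex \<Rightarrow> tv \<Rightarrow> bool" where
  "centralV w f \<longleftrightarrow> (\<forall>g. LW w g f = RW w g f)"

definition SC :: "nat \<Rightarrow> tv \<Rightarrow> bool" where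
  "SC N f \<longleftrightarrow> (\<forall>a b c. f (a,b,c) \<noteq> 0 \<longrightarrow> int N dvd a \<and> int N dvd b)"

lemma om_powi_dvd: "N \<ge> 1 \<Longrightarrow> int N dvd k \<Longrightarrow> om N powi k = 1"
  using om_powi_eq_1_iff by blast

lemma SC_central:
  assumes N: "N \<ge> 1" and S: "SC N f"
  shows "centralV (om N) f"
  unfolding centralV_def
proof
  fix g
  have A: "f (a,b,c) = 0 \<or> (int N dvd a \<and> int N dvd b)" for a b c
    using S unfolding SC_def by blast
  show "LW (om N) g f = RW (om N) g f"
  proof (rule tv_ext, cases g)
    fix a b c
    assume "g = WX"
    then show "LW (om N) g f (a,b,c) = RW (om N) g f (a,b,c)"
      using A[of "a - 1" b c] om_powi_dvd[OF N, of "- b"] by auto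
  next
    fix a b c
    assume "g = WXi"
    then show "LW (om N) g f (a,b,c) = RW (om N) g f (a,b,c)"
      using A[of "a + 1" b c] om_powi_dvd[OF N, of "b"] by auto
  next
    fix a b c
    assume "g = WY"
    then show "LW (om N) g f (a,b,c) = RW (om N) g f (a,b,c)"
      using A[of a "b - 1" c] om_powi_dvd[OF N, of "- a"] by auto
  next
    fix a b c
    assume "g = WYi"
    then show "LW (om N) g f (a,b,c) = RW (om N) g f (a,b,c)"
      using A[of a "b + 1" c] om_powi_dvd[OF N, of "a"] by auto
  qed auto
qed

lemma XY_SC:
  assumes N: "N \<ge> 1" and X: "LW (om N) WX f = RW (om N) WX f" and Y: "LW (om N) WY f = RW (om N) WY f"
  shows "SC N f"
  unfolding SC_def
proof (intro allI impI)
  fix a b c assume nz: "f (a,b,c) \<noteq> 0"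
  have "f (a,b,c) = om N powi (- b) * f (a,b,c)"
    using fun_cong[OF X, of "(a+1,b,c)"] by simp
  then have "om N powi (- b) = 1" using nz by simp
  then have 1: "int N dvd b" using om_powi_eq_1_iff[OF N] by simp
  have "om N powi (- a) * f (a,b,c) = f (a,b,c)"
    using fun_cong[OF Y, of "(a,b+1,c)"] by simp
  then have "om N powi (- a) = 1" using nz by simp
  then have "int N dvd a" using om_powi_eq_1_iff[OF N] by simp
  with 1 show "int N dvd a \<and> int N dvd b" by simp
qed

section \<open>Right action\<close>

primrec rwop :: "('g \<Rightarrow> 'm vec \<Rightarrow> 'm vec) \<Rightarrow> 'g list \<Rightarrow> 'm vec \<Rightarrow> 'm vec" where
  "rwop Rg [] f = f"
| "rwop Rg (g # u) f = rwop Rg u (Rg g f)"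

lemma lin_rwop: "(\<And>g. lin (Rg g)) \<Longrightarrow> lin (rwop Rg u)"
proof (induction u)
  case Nil then show ?case by (simp add: lin_id)
next
  case (Cons g u)
  have "lin (\<lambda>f. rwop Rg u (Rg g f))" by (rule lin_comp[OF Cons.IH[OF Cons.prems] Cons.prems])
  moreover have "rwop Rg (g # u) = (\<lambda>f. rwop Rg u (Rg g f))" by (rule ext) simp
  ultimately show ?case by simp
qed

lemma wop_RW: "w \<noteq> 0 \<Longrightarrow> wop (LW w) u (RW w h f) = RW w h (wop (LW w) u f)"
  by (induction u) (auto simp: LR_comm)

lemma wop_rwop: "w \<noteq> 0 \<Longrightarrow> wop (LW w) u (rwop (RW w) v f) = rwop (RW w) v (wop (LW w) u f)"
  by (induction v arbitrary: f) (auto simp: wop_RW)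

lemma wop_d0: "w \<noteq> 0 \<Longrightarrow> wop (LW w) u d0 = rwop (RW w) u d0"
proof (induction u)
  case Nil then show ?case by simp
next
  case (Cons g u)
  have "wop (LW w) (g # u) d0 = LW w g (rwop (RW w) u d0)" using Cons by simp
  also have "\<dots> = rwop (RW w) u (LW w g d0)"
    using wop_rwop[OF Cons.prems, of "[g]" u d0] by simp
  also have "\<dots> = rwop (RW w) (g # u) d0" by (simp add: LR_d0)
  finally show ?case .
qed

lemma wop_central: "centralV w f \<Longrightarrow> w \<noteq> 0 \<Longrightarrow> wop (LW w) u f = rwop (RW w) u f"
proof (induction u arbitrary: f)
  case Nil then show ?case by simp
next
  case (Cons g u)
  have "wop (LW w) (g # u) f = LW w g (rwop (RW w) u f)" using Cons by simp
  also have "\<dots> = rwop (RW w) u (LW w g f)"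
    using wop_rwop[OF Cons.prems(2), of "[g]" u f] by simp
  also have "\<dots> = rwop (RW w) (g # u) f" using Cons.prems unfolding centralV_def by simp
  finally show ?case .
qed

lemma act_eq_words: "(\<And>u. L1 u f = L2 u f) \<Longrightarrow> act L1 p f = act L2 p f"
  unfolding act_def by simp

lemma rho_mult_right:
  assumes "fa p" "fa v"
  shows "rhoW N (fa_mult p v) = act (rwop (RW (om N))) v (rhoW N p)"
proof -
  let ?L = "wop (LW (om N))" and ?R = "rwop (RW (om N))"
  have fin: "finite {u. v u \<noteq> 0}" using assms unfolding fa_def by simp
  have linA: "lin (act ?L p)" by (rule lin_act) (rule lin_wop[OF lin_LW])
  have "rhoW N (fa_mult p v) = act ?L p (act ?L v d0)"
    unfolding rhoW_def using assms by (simp add: act_mult_W)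
  also have "act ?L v d0 = act ?R v d0"
    by (rule act_eq_words) (simp add: wop_d0)
  also have "act ?L p (act ?R v d0) = (\<lambda>m. \<Sum>u\<in>{u. v u \<noteq> 0}. v u * act ?L p (?R u d0) m)"
    unfolding act_def[of ?R] by (rule lin_scal_sum[OF linA fin])
  also have "\<dots> = (\<lambda>m. \<Sum>u\<in>{u. v u \<noteq> 0}. v u * ?R u (act ?L p d0) m)"
  proof -
    have "act ?L p (?R u d0) = ?R u (act ?L p d0)" for u
      by (rule act_commute[OF assms(1) whom_W]) (auto simp: lin_rwop lin_RW wop_rwop)
    then show ?thesis by simp
  qed
  also have "\<dots> = act ?R v (rhoW N p)" unfolding act_def rhoW_def by simp
  finally show ?thesis .
qed

lemma rho_mult_left:
  "fa p \<Longrightarrow> fa v \<Longrightarrow> rhoW N (fa_mult v p) = act (wop (LW (om N))) v (rhoW N p)"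
  unfolding rhoW_def by (simp add: act_mult_W)

lemma rho_fa[simp]: "fa p \<Longrightarrow> fa q \<Longrightarrow> rhoW N (fa_sub p q) = (\<lambda>m. rhoW N p m - rhoW N q m)"
  by (rule rho_sub)

lemma quot_central_iff:
  assumes "fa w"
  shows "quot_central (W_ideal N) w \<longleftrightarrow> centralV (om N) (rhoW N w)"
proof
  assume Q: "quot_central (W_ideal N) w"
  show "centralV (om N) (rhoW N w)"
    unfolding centralV_def
  proof
    fix g
    have "fa_sub (fa_mult w (fa_gen g)) (fa_mult (fa_gen g) w) \<in> W_ideal N"
      using Q unfolding quot_central_def by simp
    then have "rhoW N (fa_mult w (fa_gen g)) = rhoW N (fa_mult (fa_gen g) w)"
      using rho_fcong[of N] assms unfolding fcong_def W_ideal_def by simp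
    moreover have "rhoW N (fa_mult w (fa_gen g)) = RW (om N) g (rhoW N w)"
      using rho_mult_right[OF assms fa_genI, of N g] by (simp add: fa_gen_word act_word)
    moreover have "rhoW N (fa_mult (fa_gen g) w) = LW (om N) g (rhoW N w)"
      using rho_mult_left[OF assms fa_genI, of N g] by (simp add: fa_gen_word act_word)
    ultimately show "LW (om N) g (rhoW N w) = RW (om N) g (rhoW N w)" by simp
  qed
next
  assume C: "centralV (om N) (rhoW N w)"
  show "quot_central (W_ideal N) w"
    unfolding quot_central_def
  proof (intro conjI allI impI)
    show "fa w" by fact
    fix v :: "wgen fa" assume v: "fa v"
    have "rhoW N (fa_mult w v) = rhoW N (fa_mult v w)"
      using rho_mult_right[OF assms v, of N] rho_mult_left[OF assms v, of N]
        act_eq_words[of "wop (LW (om N))" "rhoW N w" "rwop (RW (om N))" v] wop_central[OF C]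
      by simp
    then show "fa_sub (fa_mult w v) (fa_mult v w) \<in> W_ideal N"
      using assms v by (intro rho_zero_ideal) auto
  qed
qed

lemma subalg_fa: "p \<in> fa_subalg S \<Longrightarrow> (\<And>s. s \<in> S \<Longrightarrow> fa s) \<Longrightarrow> fa p"
  by (induction rule: fa_subalg.induct) auto

lemma subalg_zero: "fa_zero \<in> fa_subalg S"
proof -
  have "fa_smult 0 fa_one = fa_zero" unfolding fa_smult_def fa_zero_def by simp
  then show ?thesis using fa_subalg.smult[OF fa_subalg.one, where c=0 and S=S] by metis
qed

lemma subalg_pow: "s \<in> fa_subalg S \<Longrightarrow> fa_pow s n \<in> fa_subalg S"
  by (induction n) (auto intro: fa_subalg.one fa_subalg.mult)

lemma subalg_sum: "finite F \<Longrightarrow> (\<And>i. i \<in> F \<Longrightarrow> G i \<in> fa_subalg S) \<Longrightarrow> fa_sum G F \<in> fa_subalg S"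
  by (induction F rule: finite_induct) (auto simp: fa_sum_insert subalg_zero intro: fa_subalg.add)

lemma qc_one: "quot_central (fa_ideal R) fa_one"
  unfolding quot_central_def using fcong_refl[unfolded fcong_def] by simp blast

lemma qc_add: "quot_central (fa_ideal R) a \<Longrightarrow> quot_central (fa_ideal R) b \<Longrightarrow>
   quot_central (fa_ideal R) (fa_add a b)"
  unfolding quot_central_def
proof (intro conjI allI impI, simp)
  fix v :: "'a fa" assume A: "fa a \<and> (\<forall>v. fa v \<longrightarrow> fa_sub (fa_mult a v) (fa_mult v a) \<in> fa_ideal R)"
    and B: "fa b \<and> (\<forall>v. fa v \<longrightarrow> fa_sub (fa_mult b v) (fa_mult v b) \<in> fa_ideal R)" and v: "fa v"
  have "fa_add (fa_sub (fa_mult a v) (fa_mult v a)) (fa_sub (fa_mult b v) (fa_mult v b)) \<in> fa_ideal R"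
    using A B v by (intro fa_ideal.add) auto
  moreover have "fa_add (fa_sub (fa_mult a v) (fa_mult v a)) (fa_sub (fa_mult b v) (fa_mult v b)) =
     fa_sub (fa_mult (fa_add a b) v) (fa_mult v (fa_add a b))"
    by (simp add: fa_mult_add_left fa_mult_add_right) (auto simp: fa_add_def fa_sub_def)
  ultimately show "fa_sub (fa_mult (fa_add a b) v) (fa_mult v (fa_add a b)) \<in> fa_ideal R" by simp
qed

lemma qc_smult: "quot_central (fa_ideal R) a \<Longrightarrow> quot_central (fa_ideal R) (fa_smult c a)"
  unfolding quot_central_def
proof (intro conjI allI impI, simp)
  fix v :: "'a fa" assume A: "fa a \<and> (\<forall>v. fa v \<longrightarrow> fa_sub (fa_mult a v) (fa_mult v a) \<in> fa_ideal R)"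
    and v: "fa v"
  have "fa_smult c (fa_sub (fa_mult a v) (fa_mult v a)) \<in> fa_ideal R"
    using A v by (intro I_smult) auto
  moreover have "fa_smult c (fa_sub (fa_mult a v) (fa_mult v a)) =
     fa_sub (fa_mult (fa_smult c a) v) (fa_mult v (fa_smult c a))"
    by (simp add: fa_mult_smult_left fa_mult_smult_right) (auto simp: fa_smult_def fa_sub_def algebra_simps)
  ultimately show "fa_sub (fa_mult (fa_smult c a) v) (fa_mult v (fa_smult c a)) \<in> fa_ideal R" by simp
qed

lemma qc_mult: "quot_central (fa_ideal R) a \<Longrightarrow> quot_central (fa_ideal R) b \<Longrightarrow>
   quot_central (fa_ideal R) (fa_mult a b)"
  unfolding quot_central_def
proof (intro conjI allI impI, simp)
  fix v :: "'a fa" assume A: "fa a \<and> (\<forall>v. fa v \<longrightarrow> fa_sub (fa_mult a v) (fa_mult v a) \<in> fa_ideal R)"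
    and B: "fa b \<and> (\<forall>v. fa v \<longrightarrow> fa_sub (fa_mult b v) (fa_mult v b) \<in> fa_ideal R)" and v: "fa v"
  have "fa_add (fa_mult a (fa_sub (fa_mult b v) (fa_mult v b))) (fa_mult (fa_sub (fa_mult a v) (fa_mult v a)) b)
       \<in> fa_ideal R"
    using A B v by (intro fa_ideal.add I_left I_right) auto
  moreover have "fa_add (fa_mult a (fa_sub (fa_mult b v) (fa_mult v b))) (fa_mult (fa_sub (fa_mult a v) (fa_mult v a)) b) =
     fa_sub (fa_mult (fa_mult a b) v) (fa_mult v (fa_mult a b))"
    by (simp add: fa_mult_sub_left fa_mult_sub_right fa_mult_assoc) (auto simp: fa_add_def fa_sub_def)
  ultimately show "fa_sub (fa_mult (fa_mult a b) v) (fa_mult v (fa_mult a b)) \<in> fa_ideal R" by simp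
qed

abbreviation S0 :: "nat \<Rightarrow> wgen fa set" where
  "S0 N \<equiv> {fa_gen WZ, fa_gen WZi, fa_pow (fa_gen WX) N, fa_pow (fa_gen WXi) N,
           fa_pow (fa_gen WY) N, fa_pow (fa_gen WYi) N}"

lemma rho_gen: "rhoW N (fa_gen g) = LW (om N) g d0"
  unfolding rhoW_def by (simp add: act_gen_wop)

lemma rho_pow_gen: "rhoW N (fa_pow (fa_gen g) n) = (LW (om N) g ^^ n) d0"
  unfolding rhoW_def by (simp add: act_fa_pow_W)

lemma dvd_neg_aux: "a + int N = 0 \<Longrightarrow> int N dvd a"
proof -
  assume "a + int N = 0" then have "a = - int N" by linarith
  then show ?thesis by simp
qed

lemma S0_SC: "s \<in> S0 N \<Longrightarrow> SC N (rhoW N s)"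
  unfolding SC_def
  by (auto simp: rho_gen rho_pow_gen LW_pow d0_def dvd_neg_aux split: if_splits)

lemma S0_central: "N \<ge> 1 \<Longrightarrow> s \<in> S0 N \<Longrightarrow> quot_central (W_ideal N) s"
  by (subst quot_central_iff) (auto intro!: SC_central S0_SC)

lemma subalg_central:
  assumes N: "N \<ge> 1" and p: "p \<in> fa_subalg (S0 N)"
  shows "quot_central (W_ideal N) p"
  using p unfolding W_ideal_def
proof (induction rule: fa_subalg.induct)
  case one then show ?case by (rule qc_one)
next
  case (gen s) then show ?case using S0_central[OF N] unfolding W_ideal_def by blast
next
  case (add a b) show ?case by (rule qc_add[OF add.IH])
next
  case (smult a c) show ?case by (rule qc_smult[OF smult.IH])
next
  case (mult a b) show ?case by (rule qc_mult[OF mult.IH])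
qed

lemma ipow_subalg:
  assumes "a \<in> fa_subalg S" "a' \<in> fa_subalg S"
  shows "ipow a a' k \<in> fa_subalg S"
  unfolding ipow_def using assms by (auto intro: subalg_pow)

lemma ipow_subalg_N:
  assumes "fa_pow a N \<in> fa_subalg S" "fa_pow a' N \<in> fa_subalg S" "int N dvd k"
  shows "ipow a a' k \<in> fa_subalg S"
proof -
  obtain j where k: "k = int N * j" using assms(3) by (auto simp: dvd_def)
  show ?thesis
  proof (cases "0 \<le> j")
    case True
    then have "ipow a a' k = fa_pow (fa_pow a N) (nat j)"
      unfolding ipow_def k fa_pow_mult[symmetric]
      by (simp add: nat_mult_distrib)
    then show ?thesis using assms subalg_pow by metis
  next
    case False
    then have "ipow a a' k = fa_pow (fa_pow a' N) (nat (- j))"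
      unfolding ipow_def k fa_pow_mult[symmetric]
      using nat_mult_distrib[of "int N" "- j"] by auto
    then show ?thesis using assms subalg_pow by metis
  qed
qed

lemma Mon_subalg:
  assumes "int N dvd a" "int N dvd b"
  shows "Mon (a,b,c) \<in> fa_subalg (S0 N)"
proof -
  have "ipow gX gXi a \<in> fa_subalg (S0 N)"
    by (rule ipow_subalg_N[OF _ _ assms(1)]) (auto intro: fa_subalg.gen)
  moreover have "ipow gY gYi b \<in> fa_subalg (S0 N)"
    by (rule ipow_subalg_N[OF _ _ assms(2)]) (auto intro: fa_subalg.gen)
  moreover have "ipow gZ gZi c \<in> fa_subalg (S0 N)"
    by (rule ipow_subalg) (auto intro: fa_subalg.gen)
  ultimately show ?thesis unfolding Mon_def by (simp add: fa_subalg.mult)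
qed

theorem part1:
  assumes N: "N \<ge> 1" and w: "fa w"
  shows "quot_central (W_ideal N) w \<longleftrightarrow>
    (\<exists>p \<in> fa_subalg (S0 N). fa_sub w p \<in> W_ideal N)"
proof
  assume Q: "quot_central (W_ideal N) w"
  then have C: "centralV (om N) (rhoW N w)" using quot_central_iff[OF w] by simp
  then have S: "SC N (rhoW N w)" using XY_SC[OF N] unfolding centralV_def by blast
  obtain F where F: "finite F" and cong: "fcong (W_rels N) w (fa_sum (\<lambda>m. fa_smult (rhoW N w m) (Mon m)) F)"
    using span2[OF w] by blast
  have "fa_smult (rhoW N w m) (Mon m) \<in> fa_subalg (S0 N)" for m
  proof (cases "rhoW N w m = 0")
    case True
    then have "fa_smult (rhoW N w m) (Mon m) = fa_zero" unfolding fa_smult_def fa_zero_def by simp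
    then show ?thesis using subalg_zero by simp
  next
    case False
    obtain a b c where m: "m = (a,b,c)" by (cases m) auto
    then have "int N dvd a" "int N dvd b" using S False unfolding SC_def by auto
    then show ?thesis unfolding m by (intro fa_subalg.smult Mon_subalg)
  qed
  then have "fa_sum (\<lambda>m. fa_smult (rhoW N w m) (Mon m)) F \<in> fa_subalg (S0 N)"
    using F by (intro subalg_sum) auto
  then show "\<exists>p \<in> fa_subalg (S0 N). fa_sub w p \<in> W_ideal N"
    using cong unfolding fcong_def W_ideal_def by blast
next
  assume "\<exists>p \<in> fa_subalg (S0 N). fa_sub w p \<in> W_ideal N"
  then obtain p where p: "p \<in> fa_subalg (S0 N)" and wp: "fa_sub w p \<in> W_ideal N" by blast
  have fp: "fa p" using p by (rule subalg_fa) auto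
  have "rhoW N w = rhoW N p"
    using rho_fcong[of N w p] wp w fp unfolding fcong_def W_ideal_def by simp
  moreover have "centralV (om N) (rhoW N p)"
    using subalg_central[OF N p] quot_central_iff[OF fp] by simp
  ultimately show "quot_central (W_ideal N) w" using quot_central_iff[OF w] by simp
qed

definition LU :: "nat \<Rightarrow> ugen list \<Rightarrow> tv \<Rightarrow> tv" where
  "LU N u = act (wop (LW (om N))) (word_eval (phi_gen N) u)"

lemma phi_gen_fa[simp]: "fa (phi_gen N g)"
  unfolding phi_gen_def by (cases g) auto

lemma whom_LU: "whom (LU N)"
  unfolding LU_def by (rule whom_hom[OF whom_W]) simp

lemma act_phi: "fa p \<Longrightarrow> act (wop (LW (om N))) (phi N p) f = act (LU N) p f"
  unfolding phi_def LU_def by (rule act_fa_hom) auto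

lemma phi_fa[simp]: "fa p \<Longrightarrow> fa (phi N p)"
  unfolding phi_def by (rule fa_hom_fa) auto

lemma LU_gen: "act (LU N) (fa_gen g) f = act (wop (LW (om N))) (phi_gen N g) f"
  by (simp add: fa_gen_word act_word LU_def)

lemma LU_one: "act (LU N) fa_one f = f"
  by (simp add: fa_one_word act_word LU_def act_one_wop)

lemma BU_simps:
  "act (LU N) (fa_gen UK) f (a,b,c) = f (a - 1, b, c)"
  "act (LU N) (fa_gen UKi) f (a,b,c) = f (a + 1, b, c)"
  "act (LU N) (fa_gen UE) f (a,b,c) = xi N * (om N powi (- a) * (f (a, b - 1, c - 1) - f (a - 1, b - 1, c)))"
  "act (LU N) (fa_gen UF) f (a,b,c) = om N powi a * (f (a, b + 1, c) - f (a + 1, b + 1, c + 1))"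
  by (simp_all add: LU_gen phi_gen_def act_gen_wop act_smult act_mult_W act_sub act_one_wop)

lemma U_rels_fa: "r \<in> U_rels N \<Longrightarrow> fa r"
  unfolding U_rels_def Let_def by auto

lemma act_LU_mult: "fa p \<Longrightarrow> fa q \<Longrightarrow> act (LU N) (fa_mult p q) f = act (LU N) p (act (LU N) q f)"
  by (rule act_mult[OF whom_LU])

lemma U_rels_act:
  assumes "r \<in> U_rels N"
  shows "act (LU N) r f = (\<lambda>m. 0)"
proof -
  have q2: "om N = xi N ^ 2" by (simp add: om_def)
  have nz: "xi N \<noteq> 0" by simp
  from assms show ?thesis
    unfolding U_rels_def Let_def
    apply (simp only: insert_iff empty_iff)
    apply (elim disjE)
    by (auto intro!: tv_ext simp: act_sub act_smult act_LU_mult LU_one BU_simps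
          powi_simps q2 field_simps power2_eq_square)
qed

lemma LU_ideal: "a \<in> U_ideal N \<Longrightarrow> act (LU N) a f = (\<lambda>m. 0)"
  unfolding U_ideal_def
  by (rule act_ideal_zero[OF _ whom_LU]) (auto simp: U_rels_fa U_rels_act)

lemma U_ideal_fa: "a \<in> U_ideal N \<Longrightarrow> fa a"
  unfolding U_ideal_def by (rule ideal_fa) (auto simp: U_rels_fa)

lemma rho_finite: "fa t \<Longrightarrow> finite {m. rhoW N t m \<noteq> 0}"
proof -
  assume "fa t"
  then obtain F where "finite F" "\<forall>m. m \<notin> F \<longrightarrow> rhoW N t m = 0" using span2 by blast
  then show ?thesis by (metis (mono_tags, lifting) finite_subset mem_Collect_eq subsetI)
qed

lemma V5:
  fixes d :: tv and w :: "int \<Rightarrow> complex"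
  assumes fin: "finite {m. d m \<noteq> 0}"
    and rel: "\<And>a b c. d (a, b, c - 1) = w b * d (a - 1, b, c)"
  shows "d = (\<lambda>m. 0)"
proof (rule ccontr)
  assume "d \<noteq> (\<lambda>m. 0)"
  then obtain a b c where nz: "d (a,b,c) \<noteq> 0" by (metis ext prod_cases3)
  have all: "d (a - int k, b, c + int k) \<noteq> 0" for k
  proof (induction k)
    case 0 then show ?case using nz by simp
  next
    case (Suc k)
    have "d (a - int k, b, c + int k) = w b * d (a - int k - 1, b, c + int k + 1)"
      using rel[of "a - int k" b "c + int k + 1"] by simp
    then show ?case using Suc by (auto simp: algebra_simps)
  qed
  let ?f = "\<lambda>k::nat. (a - int k, b, c + int k)"
  have "inj ?f" by (rule injI) auto
  moreover have "range ?f \<subseteq> {m. d m \<noteq> 0}" using all by auto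
  ultimately have "finite (UNIV :: nat set)"
    using fin by (meson finite_imageD finite_subset)
  then show False by simp
qed

lemma act_W_RW: "fa p \<Longrightarrow> act (wop (LW (om N))) p (RW (om N) h f) = RW (om N) h (act (wop (LW (om N))) p f)"
  by (rule act_commute[OF _ whom_W lin_RW]) (use wop_RW[OF om_nz] in blast)+

theorem part2:
  assumes N: "N \<ge> 1" and Q: "quot_central (U_ideal N) u"
  shows "quot_central (W_ideal N) (phi N u)"
proof -
  have fu: "fa u" using Q unfolding quot_central_def by simp
  have fw: "fa (phi N u)" using fu by simp
  let ?w = "om N" and ?q = "xi N"
  let ?L = "wop (LW ?w)"
  define A where "A = rhoW N (phi N u)"
  have A_alt: "act (LU N) u g = act ?L (phi N u) g" for g using act_phi[OF fu] by simp
  have key: "act ?L (phi N u) (act (LU N) v d0) = act (LU N) v A" if v: "fa v" for v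
  proof -
    have "fa_sub (fa_mult u v) (fa_mult v u) \<in> U_ideal N" using Q v unfolding quot_central_def by blast
    then have "act (LU N) (fa_sub (fa_mult u v) (fa_mult v u)) d0 = (\<lambda>m. 0)" by (rule LU_ideal)
    then have "(\<lambda>m. act (LU N) u (act (LU N) v d0) m - act (LU N) v (act (LU N) u d0) m) = (\<lambda>m. 0)"
      using fu v by (simp add: act_sub act_LU_mult)
    then have "act (LU N) u (act (LU N) v d0) = act (LU N) v (act (LU N) u d0)"
      by (metis (no_types, lifting) eq_iff_diff_eq_0 ext)
    then show ?thesis unfolding A_def rhoW_def A_alt by simp
  qed
  have linP: "lin (act ?L (phi N u))" by (rule lin_act) (rule lin_wop[OF lin_LW])
  have "act (LU N) (fa_gen UK) d0 = RW ?w WX d0"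
    by (rule tv_ext) (simp add: BU_simps d0_def)
  then have K1: "RW ?w WX A = act (LU N) (fa_gen UK) A"
    using key[of "fa_gen UK"] act_W_RW[OF fw, of N WX d0] unfolding A_def rhoW_def by simp
  have E1: "?w powi (- b) * A (a - 1, b, c) = A (a - 1, b, c)" for a b c
    using fun_cong[OF K1, of "(a,b,c)"] by (simp add: BU_simps)
  have "act (LU N) (fa_gen UE) d0 = (\<lambda>m. ?q * (RW ?w WZ (RW ?w WY d0) m - RW ?w WX (RW ?w WY d0) m))"
    by (rule tv_ext) (auto simp: BU_simps d0_def)
  then have "act ?L (phi N u) (act (LU N) (fa_gen UE) d0) =
      (\<lambda>m. ?q * (RW ?w WZ (RW ?w WY A) m - RW ?w WX (RW ?w WY A) m))"
    by (simp add: lin_scal[OF linP] lin_diff[OF linP] act_W_RW[OF fw] A_def rhoW_def)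
  then have K2: "(\<lambda>m. ?q * (RW ?w WZ (RW ?w WY A) m - RW ?w WX (RW ?w WY A) m)) = act (LU N) (fa_gen UE) A"
    using key[of "fa_gen UE"] by simp
  have E2: "?q * (A (a, b - 1, c - 1) - ?w powi (- b) * A (a - 1, b - 1, c)) =
       ?q * (?w powi (- a) * (A (a, b - 1, c - 1) - A (a - 1, b - 1, c)))" for a b c
    using fun_cong[OF K2, of "(a,b,c)"] by (simp add: BU_simps)
  define d :: tv where "d = (\<lambda>(a,b,c). (1 - ?w powi (- a)) * A (a, b - 1, c))"
  have finA: "finite {m. A m \<noteq> 0}" unfolding A_def by (rule rho_finite[OF fw])
  have "{m. d m \<noteq> 0} \<subseteq> (\<lambda>(a,b,c). (a, b + 1, c)) ` {m. A m \<noteq> 0}"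
  proof
    fix m assume "m \<in> {m. d m \<noteq> 0}"
    then obtain a b c where m: "m = (a,b,c)" and "A (a, b - 1, c) \<noteq> 0"
      unfolding d_def by (cases m) auto
    then show "m \<in> (\<lambda>(a,b,c). (a, b + 1, c)) ` {m. A m \<noteq> 0}"
      by (intro image_eqI[where x="(a, b - 1, c)"]) auto
  qed
  then have find: "finite {m. d m \<noteq> 0}" using finA by (meson finite_imageI finite_subset)
  have rel: "d (a, b, c - 1) = ?w powi (- b) * d (a - 1, b, c)" for a b c
  proof -
    have nzw: "?w \<noteq> 0" by simp
    have e2: "(1 - ?w powi (- a)) * A (a, b - 1, c - 1) =
        (?w powi (- b) - ?w powi (- a)) * A (a - 1, b - 1, c)"
    proof -
      have "A (a, b - 1, c - 1) - ?w powi (- b) * A (a - 1, b - 1, c) =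
          ?w powi (- a) * (A (a, b - 1, c - 1) - A (a - 1, b - 1, c))"
        using E2[where a=a and b=b and c=c] xi_nz[of N] mult_left_cancel by blast
      then show ?thesis by (simp add: algebra_simps)
    qed
    have e1: "?w powi (- (b - 1)) * A (a - 1, b - 1, c) = A (a - 1, b - 1, c)"
      using E1[where a=a and b="b - 1" and c=c] by simp
    have "?w powi (- a) * A (a - 1, b - 1, c) = ?w powi (- a) * (?w powi (- (b - 1)) * A (a - 1, b - 1, c))"
      using e1 by simp
    also have "\<dots> = ?w powi (- b) * ?w powi (- (a - 1)) * A (a - 1, b - 1, c)"
      using nzw by (simp add: powi_simps field_simps)
    finally have e3: "?w powi (- a) * A (a - 1, b - 1, c) = ?w powi (- b) * ?w powi (- (a - 1)) * A (a - 1, b - 1, c)" .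
    have "d (a, b, c - 1) = (?w powi (- b) - ?w powi (- a)) * A (a - 1, b - 1, c)"
      unfolding d_def using e2 by simp
    also have "\<dots> = ?w powi (- b) * A (a - 1, b - 1, c) - ?w powi (- a) * A (a - 1, b - 1, c)"
      by (simp add: algebra_simps)
    also have "\<dots> = ?w powi (- b) * A (a - 1, b - 1, c) - ?w powi (- b) * ?w powi (- (a - 1)) * A (a - 1, b - 1, c)"
      by (simp only: e3)
    also have "\<dots> = ?w powi (- b) * d (a - 1, b, c)"
      unfolding d_def by (simp add: algebra_simps)
    finally show ?thesis .
  qed
  have dz: "d = (\<lambda>m. 0)" by (rule V5[OF find, of "\<lambda>b. ?w powi (- b)"]) (rule rel)
  have "SC N A"
    unfolding SC_def
  proof (intro allI impI conjI)
    fix a b c assume nz: "A (a,b,c) \<noteq> 0"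
    have "?w powi (- b) * A (a, b, c) = A (a, b, c)" using E1[where a="a+1" and b=b and c=c] by simp
    then have "?w powi (- b) = 1" using nz by simp
    then show "int N dvd b" using om_powi_eq_1_iff[OF N] by simp
    have "(1 - ?w powi (- a)) * A (a, b, c) = 0" using fun_cong[OF dz, of "(a, b+1, c)"]
      unfolding d_def by simp
    then have "?w powi (- a) = 1" using nz by simp
    then show "int N dvd a" using om_powi_eq_1_iff[OF N] by simp
  qed
  then have "centralV (om N) A" by (rule SC_central[OF N])
  then show ?thesis using quot_central_iff[OF fw] unfolding A_def by simp
qed

lemma om_pow_inj: "N \<ge> 1 \<Longrightarrow> inj_on (\<lambda>k. om N ^ k) {..<N}"
proof (rule inj_onI)
  fix i j assume N: "N \<ge> 1" and i: "i \<in> {..<N}" and j: "j \<in> {..<N}" and e: "om N ^ i = om N ^ j"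
  show "i = j"
  proof (rule ccontr)
    assume "i \<noteq> j"
    then consider "i < j" | "j < i" by linarith
    then show False
    proof cases
      case 1
      have "om N ^ j = om N ^ i * om N ^ (j - i)" using 1 by (simp add: power_add[symmetric])
      then have "om N ^ (j - i) = 1" using e by simp
      then have "N dvd (j - i)" using om_pow_eq_1_iff[OF N] by simp
      then show False using 1 i j by (auto dest: dvd_imp_le)
    next
      case 2
      have "om N ^ i = om N ^ j * om N ^ (i - j)" using 2 by (simp add: power_add[symmetric])
      then have "om N ^ (i - j) = 1" using e by simp
      then have "N dvd (i - j)" using om_pow_eq_1_iff[OF N] by simp
      then show False using 2 i j by (auto dest: dvd_imp_le)
    qed
  qed
qed

lemma polyA:
  assumes N: "N \<ge> 1"
  shows "(\<Prod>k<N. [:- (om N ^ k), 1:]) = monom 1 N - 1"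
proof (rule ccontr)
  let ?p = "\<Prod>k<N. [:- (om N ^ k), 1:]"
  let ?r = "monom (1::complex) N - 1"
  let ?D = "?r - ?p"
  assume ne: "?p \<noteq> ?r"
  then have Dnz: "?D \<noteq> 0" by simp
  have degp: "degree ?p = N" by (subst degree_prod_eq_sum_degree) auto
  have lcp: "coeff ?p N = 1" using lead_coeff_prod[of "\<lambda>k. [:- (om N ^ k), 1:]" "{..<N}"] degp by simp
  have degr: "degree ?r \<le> N" by (rule degree_diff_le) (auto simp: degree_monom_le)
  have "degree ?D \<le> N" using degp degr by (rule_tac degree_diff_le) auto
  moreover have "coeff ?D N = 0" using lcp N by simp
  ultimately have degD: "degree ?D < N" using Dnz
    by (metis le_neq_implies_less leading_coeff_0_iff)
  have roots: "(\<lambda>k. om N ^ k) ` {..<N} \<subseteq> {x. poly ?D x = 0}"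
  proof
    fix x assume "x \<in> (\<lambda>k. om N ^ k) ` {..<N}"
    then obtain k where k: "k < N" "x = om N ^ k" by auto
    have "poly ?p x = 0" unfolding poly_prod using k by (intro prod_zero) (auto intro!: bexI[of _ k])
    moreover have "poly ?r x = 0"
    proof -
      have "x ^ N = (om N ^ N) ^ k" using k by (simp add: power_mult[symmetric] mult.commute)
      also have "om N ^ N = 1" using om_pow_eq_1_iff[OF N] by simp
      finally show ?thesis by (simp add: poly_monom)
    qed
    ultimately show "x \<in> {x. poly ?D x = 0}" by simp
  qed
  have "N = card ((\<lambda>k. om N ^ k) ` {..<N})" using card_image[OF om_pow_inj[OF N]] by simp
  also have "\<dots> \<le> card {x. poly ?D x = 0}"
    by (rule card_mono[OF poly_roots_finite[OF Dnz] roots])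
  also have "\<dots> \<le> degree ?D" by (rule card_poly_roots_bound[OF Dnz])
  finally show False using degD by simp
qed

lemma polyB:
  assumes N: "N \<ge> 1"
  shows "(\<Prod>k<N. [:1, - (om N ^ k):]) = 1 - monom 1 N"
proof -
  have "poly (\<Prod>k<N. [:1, - (om N ^ k):]) t = poly (1 - monom 1 N) t" for t :: complex
  proof (cases "t = 0")
    case True then show ?thesis using N by (simp add: poly_prod poly_monom)
  next
    case False
    have "poly (\<Prod>k<N. [:1, - (om N ^ k):]) t = (\<Prod>k<N. t * (inverse t - om N ^ k))"
      unfolding poly_prod using False by (intro prod.cong) (auto simp: field_simps)
    also have "\<dots> = t ^ N * (\<Prod>k<N. (inverse t - om N ^ k))"
      by (simp add: prod.distrib)
    also have "(\<Prod>k<N. (inverse t - om N ^ k)) = poly (\<Prod>k<N. [:- (om N ^ k), 1:]) (inverse t)"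
      unfolding poly_prod by simp
    also have "\<dots> = inverse t ^ N - 1" unfolding polyA[OF N] by (simp add: poly_monom)
    also have "t ^ N * (inverse t ^ N - 1) = 1 - t ^ N" using False
      by (simp add: algebra_simps power_inverse[symmetric] power_mult_distrib[symmetric])
    finally show ?thesis by (simp add: poly_monom)
  qed
  then show ?thesis using poly_eq_poly_eq_iff by blast
qed

definition PE :: "nat \<Rightarrow> nat \<Rightarrow> complex poly" where
  "PE N n = (\<Prod>k<n. [:- (om N ^ k), 1:])"
definition PF :: "nat \<Rightarrow> nat \<Rightarrow> complex poly" where
  "PF N n = (\<Prod>k<n. [:1, - (om N ^ k):])"

lemma PE_Suc: "PE N (Suc n) = [:- (om N ^ n), 1:] * PE N n"
  unfolding PE_def by (simp add: mult.commute)
lemma PF_Suc: "PF N (Suc n) = [:1, - (om N ^ n):] * PF N n"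
  unfolding PF_def by (simp add: mult.commute)

lemma coeff_linE: "coeff ([:- c, 1:] * p) j = (if j = 0 then 0 else coeff p (j - 1)) - c * coeff (p :: complex poly) j"
  by (cases j) auto
lemma coeff_linF: "coeff ([:1, - c:] * p) j = coeff (p :: complex poly) j - c * (if j = 0 then 0 else coeff p (j - 1))"
  by (cases j) auto

lemma d0_apply: "d0 (a,b,c) = (if a = 0 \<and> b = 0 \<and> c = 0 then 1 else 0)"
  unfolding d0_def by simp

lemma BE_pow:
  "(act (LU N) (fa_gen UE) ^^ n) d0 (a,b,c) =
     xi N ^ n * (om N powi (- a)) ^ n *
     (if b = int n \<and> 0 \<le> c \<and> a + c = int n then coeff (PE N n) (nat c) else 0)"
proof (induction n arbitrary: a b c)
  case 0 then show ?case by (auto simp: d0_def PE_def)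
next
  case (Suc n)
  let ?w = "om N" and ?q = "xi N"
  have nz: "?w \<noteq> 0" by simp
  have sh: "(?w powi (- (a - 1))) ^ n = (?w powi (- a)) ^ n * ?w ^ n"
    using nz by (simp add: powi_simps field_simps power_mult_distrib)
  have "(act (LU N) (fa_gen UE) ^^ Suc n) d0 (a,b,c) =
     ?q * (?w powi (- a) * ((act (LU N) (fa_gen UE) ^^ n) d0 (a, b - 1, c - 1)
                           - (act (LU N) (fa_gen UE) ^^ n) d0 (a - 1, b - 1, c)))"
    by (simp add: BU_simps)
  also have "\<dots> = ?q * (?w powi (- a) * (
        ?q ^ n * (?w powi (- a)) ^ n *
          (if b - 1 = int n \<and> 0 \<le> c - 1 \<and> a + (c - 1) = int n then coeff (PE N n) (nat (c - 1)) else 0)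
      - ?q ^ n * ((?w powi (- a)) ^ n * ?w ^ n) *
          (if b - 1 = int n \<and> 0 \<le> c \<and> a - 1 + c = int n then coeff (PE N n) (nat c) else 0)))"
    by (simp only: Suc.IH sh)
  also have "\<dots> = ?q ^ Suc n * (?w powi (- a)) ^ Suc n *
     (if b = int (Suc n) \<and> 0 \<le> c \<and> a + c = int (Suc n) then coeff (PE N (Suc n)) (nat c) else 0)"
  proof (cases "b = int (Suc n) \<and> a + c = int (Suc n)")
    case False then show ?thesis by auto
  next
    case True
    show ?thesis
    proof (cases "c \<ge> 1")
      case c: True
      have "nat (c - 1) = nat c - 1" "nat c \<noteq> 0" using c by auto
      then show ?thesis using True c unfolding PE_Suc coeff_linE by (simp add: algebra_simps)
    next
      case False
      show ?thesis
      proof (cases "c = 0")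
        case True
        then show ?thesis using \<open>b = int (Suc n) \<and> a + c = int (Suc n)\<close>
          unfolding PE_Suc coeff_linE by (simp add: algebra_simps)
      next
        case False
        then show ?thesis using \<open>\<not> c \<ge> 1\<close> by auto
      qed
    qed
  qed
  finally show ?case .
qed


lemma BF_pow:
  "(act (LU N) (fa_gen UF) ^^ n) d0 (a,b,c) =
     (om N powi a) ^ n *
     (if b = - int n \<and> a = c \<and> a \<le> 0 then coeff (PF N n) (nat (- a)) else 0)"
proof (induction n arbitrary: a b c)
  case 0 then show ?case by (auto simp: d0_def PF_def)
next
  case (Suc n)
  let ?w = "om N"
  have nz: "?w \<noteq> 0" by simp
  have "?w powi (a + 1) = ?w powi a * ?w" using nz by (simp add: power_int_add)
  then have sh: "(?w powi (a + 1)) ^ n = (?w powi a) ^ n * ?w ^ n"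
    by (simp add: power_mult_distrib)
  have "(act (LU N) (fa_gen UF) ^^ Suc n) d0 (a,b,c) =
     ?w powi a * ((act (LU N) (fa_gen UF) ^^ n) d0 (a, b + 1, c)
                   - (act (LU N) (fa_gen UF) ^^ n) d0 (a + 1, b + 1, c + 1))"
    by (simp add: BU_simps)
  also have "\<dots> = ?w powi a * (
        (?w powi a) ^ n *
          (if b + 1 = - int n \<and> a = c \<and> a \<le> 0 then coeff (PF N n) (nat (- a)) else 0)
      - ((?w powi a) ^ n * ?w ^ n) *
          (if b + 1 = - int n \<and> a + 1 = c + 1 \<and> a + 1 \<le> 0 then coeff (PF N n) (nat (- (a + 1))) else 0))"
    by (simp only: Suc.IH sh)
  also have "\<dots> = (?w powi a) ^ Suc n *
     (if b = - int (Suc n) \<and> a = c \<and> a \<le> 0 then coeff (PF N (Suc n)) (nat (- a)) else 0)"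
  proof (cases "b = - int (Suc n) \<and> a = c")
    case False then show ?thesis by auto
  next
    case True
    show ?thesis
    proof (cases "a \<le> -1")
      case c: True
      have "nat (- (a + 1)) = nat (- a) - 1" "nat (- a) \<noteq> 0" using c by auto
      then show ?thesis using True c unfolding PF_Suc coeff_linF by (simp add: algebra_simps)
    next
      case False
      show ?thesis
      proof (cases "a = 0")
        case True
        then show ?thesis using \<open>b = - int (Suc n) \<and> a = c\<close>
          unfolding PF_Suc coeff_linF by (simp add: algebra_simps)
      next
        case False
        then show ?thesis using \<open>\<not> a \<le> -1\<close> by auto
      qed
    qed
  qed
  finally show ?case .
qed

lemma act_LU_pow: "fa p \<Longrightarrow> act (LU N) (fa_pow p n) f = (act (LU N) p ^^ n) f"
proof -
  assume "fa p"
  have e1: "act (LU N) fa_one = (\<lambda>f. f)" by (rule ext) (simp add: LU_one)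
  show ?thesis by (rule act_pow[OF whom_LU e1 \<open>fa p\<close>])
qed

lemma rho_phi: "fa p \<Longrightarrow> rhoW N (phi N p) = act (LU N) p d0"
  unfolding rhoW_def by (simp add: act_phi)

theorem part3K:
  assumes N: "N \<ge> 1"
  shows "fa_sub (phi N (fa_pow (fa_gen UK) N)) (fa_pow (fa_gen WX) N) \<in> W_ideal N"
proof (rule rho_zero_ideal)
  show "fa (fa_sub (phi N (fa_pow (fa_gen UK) N)) (fa_pow (fa_gen WX) N))" by simp
  have e: "act (LU N) (fa_gen UK) = LW (om N) WX" by (rule ext, rule tv_ext) (simp add: BU_simps)
  show "rhoW N (fa_sub (phi N (fa_pow (fa_gen UK) N)) (fa_pow (fa_gen WX) N)) = (\<lambda>m. 0)"
    by (simp add: rho_phi act_LU_pow e rho_pow_gen)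
qed

theorem part3E:
  assumes N: "N \<ge> 1"
  shows "fa_sub (phi N (fa_pow (fa_gen UE) N))
          (fa_mult (fa_pow (fa_gen WY) N) (fa_sub (fa_pow (fa_gen WX) N) (fa_pow (fa_gen WZ) N)))
        \<in> W_ideal N"
proof (rule rho_zero_ideal)
  let ?X = "phi N (fa_pow (fa_gen UE) N)"
  let ?Y = "fa_mult (fa_pow (fa_gen WY) N) (fa_sub (fa_pow (fa_gen WX) N) (fa_pow (fa_gen WZ) N))"
  show "fa (fa_sub ?X ?Y)" by simp
  have nz: "om N \<noteq> 0" by simp
  show "rhoW N (fa_sub ?X ?Y) = (\<lambda>m. 0)"
  proof (rule tv_ext)
    fix a b c
    let ?s = "(om N powi (- a)) ^ N"
    have X: "rhoW N ?X (a,b,c) = - ?s *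
        (if b = int N \<and> 0 \<le> c \<and> a + c = int N then coeff (monom 1 N - 1) (nat c) else 0)"
    proof -
      have "rhoW N ?X = (act (LU N) (fa_gen UE) ^^ N) d0"
        by (simp add: rho_phi act_LU_pow)
      then show ?thesis by (simp only: BE_pow PE_def polyA[OF N] xi_pow_N[OF N]) simp
    qed
    have Y: "rhoW N ?Y (a,b,c) = ?s * (d0 (a - int N, b - int N, c) - d0 (a, b - int N, c - int N))"
      unfolding rhoW_def
      by (simp add: act_mult_W act_sub act_fa_pow_W LW_pow[OF nz])
    have "rhoW N (fa_sub ?X ?Y) (a,b,c) = rhoW N ?X (a,b,c) - rhoW N ?Y (a,b,c)"
      by (simp add: rho_sub)
    also have "\<dots> = 0"
    proof -
      have cm: "coeff (monom 1 N - 1 :: complex poly) j = (if N = j then 1 else 0) - (if j = 0 then 1 else 0)" for j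
        by (simp add: coeff_diff)
      show ?thesis unfolding X Y d0_apply cm using N
        by (cases "b = int N"; cases "c = 0"; cases "c = int N"; cases "a + c = int N"; cases "0 \<le> c") 
           (simp_all add: nat_eq_iff)
    qed
    finally show "rhoW N (fa_sub ?X ?Y) (a,b,c) = 0" .
  qed
qed

theorem part3F:
  assumes N: "N \<ge> 1"
  shows "fa_sub (phi N (fa_pow (fa_gen UF) N))
          (fa_mult (fa_pow (fa_gen WYi) N)
             (fa_sub fa_one (fa_mult (fa_pow (fa_gen WZi) N) (fa_pow (fa_gen WXi) N))))
        \<in> W_ideal N"
proof (rule rho_zero_ideal)
  let ?X = "phi N (fa_pow (fa_gen UF) N)"
  let ?Y = "fa_mult (fa_pow (fa_gen WYi) N)
             (fa_sub fa_one (fa_mult (fa_pow (fa_gen WZi) N) (fa_pow (fa_gen WXi) N)))"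
  show "fa (fa_sub ?X ?Y)" by simp
  have nz: "om N \<noteq> 0" by simp
  show "rhoW N (fa_sub ?X ?Y) = (\<lambda>m. 0)"
  proof (rule tv_ext)
    fix a b c
    let ?s = "(om N powi a) ^ N"
    have X: "rhoW N ?X (a,b,c) = ?s *
        (if b = - int N \<and> a = c \<and> a \<le> 0 then coeff (1 - monom 1 N) (nat (- a)) else 0)"
    proof -
      have "rhoW N ?X = (act (LU N) (fa_gen UF) ^^ N) d0"
        by (simp add: rho_phi act_LU_pow)
      then show ?thesis by (simp only: BF_pow PF_def polyB[OF N])
    qed
    have Y: "rhoW N ?Y (a,b,c) = ?s * (d0 (a, b + int N, c) - d0 (a + int N, b + int N, c + int N))"
      unfolding rhoW_def
      by (simp add: act_mult_W act_sub act_one_wop act_fa_pow_W LW_pow[OF nz])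
    have "rhoW N (fa_sub ?X ?Y) (a,b,c) = rhoW N ?X (a,b,c) - rhoW N ?Y (a,b,c)"
      by (simp add: rho_sub)
    also have "\<dots> = 0"
    proof -
      have cm: "coeff (1 - monom 1 N :: complex poly) j = (if j = 0 then 1 else 0) - (if N = j then 1 else 0)" for j
        by (simp add: coeff_diff)
      show ?thesis unfolding X Y d0_apply cm using N
        by (cases "b = - int N"; cases "a = 0"; cases "a = - int N"; cases "a = c"; cases "a \<le> 0")
           (simp_all add: nat_eq_iff)
    qed
    finally show "rhoW N (fa_sub ?X ?Y) (a,b,c) = 0" .
  qed
qed

theorem lemma3p2:
  fixes N :: nat
  assumes "N \<ge> 2"
  shows
    "(\<forall>w. fa w \<longrightarrow>
        (quot_central (W_ideal N) w \<longleftrightarrow>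
          (\<exists>p \<in> fa_subalg {fa_gen WZ, fa_gen WZi,
                            fa_pow (fa_gen WX) N, fa_pow (fa_gen WXi) N,
                            fa_pow (fa_gen WY) N, fa_pow (fa_gen WYi) N}.
             fa_sub w p \<in> W_ideal N)))
     \<and> (\<forall>u. quot_central (U_ideal N) u \<longrightarrow> quot_central (W_ideal N) (phi N u))
     \<and> fa_sub (phi N (fa_pow (fa_gen UK) N)) (fa_pow (fa_gen WX) N) \<in> W_ideal N
     \<and> fa_sub (phi N (fa_pow (fa_gen UE) N))
          (fa_mult (fa_pow (fa_gen WY) N) (fa_sub (fa_pow (fa_gen WX) N) (fa_pow (fa_gen WZ) N)))
        \<in> W_ideal N
     \<and> fa_sub (phi N (fa_pow (fa_gen UF) N))
          (fa_mult (fa_pow (fa_gen WYi) N)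
             (fa_sub fa_one (fa_mult (fa_pow (fa_gen WZi) N) (fa_pow (fa_gen WXi) N))))
        \<in> W_ideal N"
proof -
  have N: "N \<ge> 1" using assms by simp
  show ?thesis
    using part1[OF N] part2[OF N] part3K[OF N] part3E[OF N] part3F[OF N] by blast
qed

end
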